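(* Let $k\ge 2$, $x_0>0$, $s>0$, and let $N\ge 2$, $M>N$ be integers, $G_M=M-N+1$. Let $\Phi_1$ be a homogeneous Poisson point process in $\mathbb{R}^2$ of intensity $\lambda_1>0$, let $P_1,P_k,B_k,\eta,a_{n,k}>0$, $\alpha_1,\alpha_k>2$, $\delta_1=2/\alpha_1$, $\tilde P_{1k}=P_1/P_k$ and $$\omega_{1,k}(x_0)=\Big(\frac{\tilde P_{1k}G_M}{a_{n,k}B_kN}\Big)^{\delta_1/2}x_0^{\alpha_k/\alpha_1}.$$ Let $$I_{M,k}=\sum_{y\in\Phi_1,\ |y|>\omega_{1,k}(x_0)}\frac{P_1}{N}\,g_y\,\eta\,|y|^{-\alpha_1},$$ where the $g_y$ are i.i.d. Gamma$(N,1)$ random variables independent of $\Phi_1$. Then $$\mathbb{E}\big[e^{-sI_{M,k}}\big]=\exp\left[-\lambda_1\pi\delta_1\sum_{p=1}^N\binom{N}{p}\Big(s\frac{P_1}{N}\eta\Big)^p\Big(-s\frac{P_1}{N}\eta\Big)^{\delta_1-p}B\Big(-s\frac{P_1}{N}\eta\big[\omega_{1,k}(x_0)\big]^{-\alpha_1};\,p-\delta_1,\,1-N\Big)\right].$$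
   Context: $B(z;a,b)=\int_0^z t^{a-1}(1-t)^{b-1}\,dt$ is the incomplete Beta function, the integral taken along the real segment from $0$ to $z$; non-integer powers of negative reals use the principal branch, $(-y)^c=y^ce^{i\pi c}$ for $y>0$ (with this convention the exponent is real). This is the Laplace transform of the macro-cell interference seen by a typical user at the origin associated with a tier-$k$ small-cell base station at distance $x_0$: macro base stations have $M$ antennas, serve $N$ users by zero-forcing with per-stream power $P_1/N$, and those closer than $\omega_{1,k}(x_0)$ are excluded by the association rule; $a_{n,k}$ is the NOMA power-sharing coefficient of the near user in tier $k$ and $B_k$ its bias factor. *)

theory Defs
  imports "HOL-Probability.Probability"
begin

text \<open>Number of points of the (enumerated) point process X lying in A, at outcome w.
  Points are counted with multiplicity of their index.\<close>
definition pp_count :: "(nat \<Rightarrow> 'w \<Rightarrow> real^2) \<Rightarrow> (real^2) set \<Rightarrow> 'w \<Rightarrow> nat" where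
  "pp_count X A w = card {n. X n w \<in> A}"

definition homogeneous_PPP :: "'w measure \<Rightarrow> real \<Rightarrow> (nat \<Rightarrow> 'w \<Rightarrow> real^2) \<Rightarrow> bool" where
  "homogeneous_PPP M lam X \<longleftrightarrow>
     (\<forall>n. X n \<in> borel_measurable M) \<and>
     (\<forall>A \<in> sets borel. bounded A \<longrightarrow>
        (AE w in M. finite {n. X n w \<in> A}) \<and>
        (\<forall>k::nat. measure M {w \<in> space M. pp_count X A w = k}
            = (lam * measure lborel A) ^ k / fact k * exp (- lam * measure lborel A))) \<and>
     (\<forall>(I::nat set) (A::nat \<Rightarrow> (real^2) set). finite I \<longrightarrow>
        (\<forall>i\<in>I. A i \<in> sets borel \<and> bounded (A i)) \<longrightarrow>
        disjoint_family_on A I \<longrightarrow>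
        prob_space.indep_vars M (\<lambda>_. count_space UNIV) (\<lambda>i. pp_count X (A i)) I)"

text \<open>Incomplete Beta function B(z;a,b) = integral of t^(a-1) (1-t)^(b-1) along the real
  segment from 0 to z, written via the parametrisation t = z*u, u in [0,1].  Complex powers
  use the principal branch (Isabelle's complex powr: z powr c = exp (c * Ln z)), so that
  (-y) powr c = y powr c * exp(i pi c) for y > 0.\<close>
definition inc_beta :: "complex \<Rightarrow> complex \<Rightarrow> complex \<Rightarrow> complex" where
  "inc_beta z a b = integral {0..1::real}
     (\<lambda>u. z * (z * complex_of_real u) powr (a - 1) * (1 - z * complex_of_real u) powr (b - 1))"

end

theory Submission
  imports Defs
begin



lemma erlang_laplace:
  fixes t :: real and k :: nat
  assumes t: "t \<ge> 0"
  shows "(\<integral>\<^sup>+x. ennreal (erlang_density k 1 x) * ennreal (exp (- t * x)) \<partial>lborel) = ennreal (1 / (1+t)^Suc k)"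
proof -
  have l: "0 < 1 + t" using t by simp
  have nz: "(1+t)^k \<noteq> 0" "fact k \<noteq> (0::real)" "1 + t \<noteq> 0" using l by auto
  have eq: "erlang_density k 1 x * exp (- t * x) = erlang_density k (1+t) x * x^0 * (1 / (1+t)^Suc k)" for x
  proof (cases "x < 0")
    case True then show ?thesis by (simp add: erlang_density_def)
  next
    case False
    have e: "exp (- x) * exp (- t * x) = exp (- (1+t) * x)" by (simp add: exp_add[symmetric] algebra_simps)
    have h1: "(1+t)^Suc k * (1/(1+t)^Suc k) = 1" using nz by simp
    have "erlang_density k (1+t) x * x^0 * (1/(1+t)^Suc k)
        = ((1+t)^Suc k * (1/(1+t)^Suc k)) * (x^k * exp (- (1+t) * x) / fact k)"
      using False by (simp add: erlang_density_def divide_inverse mult_ac del: power_Suc)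
    also have "\<dots> = x^k * exp (- (1+t) * x) / fact k" by (simp only: h1 mult_1_left)
    also have "\<dots> = erlang_density k 1 x * exp (- t * x)"
      using False e[symmetric] by (simp add: erlang_density_def divide_inverse mult_ac)
    finally show ?thesis by simp
  qed
  have "(\<integral>\<^sup>+x. ennreal (erlang_density k 1 x) * ennreal (exp (- t * x)) \<partial>lborel)
     = (\<integral>\<^sup>+x. ennreal (erlang_density k (1+t) x * x^0) * ennreal (1 / (1+t)^Suc k) \<partial>lborel)"
    apply (intro nn_integral_cong)
    subgoal for x
      apply (subst ennreal_mult'[symmetric], simp)
      apply (subst ennreal_mult'[symmetric], use l in simp)
      apply (subst eq) ..
    done
  also have "\<dots> = (\<integral>\<^sup>+x. ennreal (erlang_density k (1+t) x * x^0) \<partial>lborel) * ennreal (1 / (1+t)^Suc k)"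
    by (rule nn_integral_multc) auto
  also have "\<dots> = ennreal (1 / (1+t)^Suc k)"
    using nn_integral_erlang_ith_moment[OF l, where k=k and i=0] by simp
  finally show ?thesis .
qed

lemma poisson_pgf:
  fixes Nc :: "'w \<Rightarrow> nat"
  assumes P: "prob_space M" and Nm: "Nc \<in> measurable M (count_space UNIV)"
    and dist: "\<forall>k::nat. measure M {w\<in>space M. Nc w = k} = \<mu>^k / fact k * exp (-\<mu>)"
    and c: "0 \<le> c" and mu: "0 \<le> \<mu>"
  shows "(\<integral>\<^sup>+w. ennreal (c ^ Nc w) \<partial>M) = ennreal (exp (-\<mu> * (1 - c)))"
proof -
  interpret prob_space M by fact
  define A where "A = (\<lambda>k. {w\<in>space M. Nc w = k})"
  have A: "A k \<in> sets M" for k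
  proof -
    have "A k = Nc -` {k} \<inter> space M" by (auto simp: A_def)
    then show ?thesis using measurable_sets[OF Nm, of "{k}"] by simp
  qed
  have disj: "disjoint_family A" by (auto simp: disjoint_family_on_def A_def)
  have "(\<integral>\<^sup>+w. ennreal (c ^ Nc w) \<partial>M) = (\<integral>\<^sup>+w. (\<Sum>k. ennreal (c^k) * indicator (A k) w) \<partial>M)"
    by (intro nn_integral_cong, subst suminf_cmult_indicator[OF disj, where i="Nc w" for w])
       (auto simp: A_def)
  also have "\<dots> = (\<Sum>k. \<integral>\<^sup>+w. ennreal (c^k) * indicator (A k) w \<partial>M)"
    by (rule nn_integral_suminf) (use A in auto)
  also have "\<dots> = (\<Sum>k. ennreal (c^k) * emeasure M (A k))"
    by (simp add: nn_integral_cmult_indicator A)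
  also have "\<dots> = (\<Sum>k. ennreal ((c*\<mu>)^k / fact k * exp (-\<mu>)))"
    apply (intro suminf_cong)
    using dist c mu by (simp add: emeasure_eq_measure A_def ennreal_mult'[symmetric] power_mult_distrib)
  also have "\<dots> = ennreal (exp (c*\<mu>) * exp (-\<mu>))"
  proof (rule suminf_ennreal_eq)
    show "0 \<le> (c*\<mu>)^k / fact k * exp (-\<mu>)" for k using c mu by simp
    show "(\<lambda>k. (c*\<mu>)^k / fact k * exp (-\<mu>)) sums (exp (c*\<mu>) * exp (-\<mu>))"
      using sums_mult2[OF exp_converges[of "c*\<mu>"], of "exp (-\<mu>)"]
      by (simp add: scaleR_conv_of_real divide_inverse mult_ac)
  qed
  also have "exp (c*\<mu>) * exp (-\<mu>) = exp (-\<mu> * (1 - c))"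
    by (simp add: exp_add[symmetric] algebra_simps)
  finally show ?thesis .
qed

lemma cond_marks:
  fixes X :: "nat \<Rightarrow> 'w \<Rightarrow> real^2" and g :: "nat \<Rightarrow> 'w \<Rightarrow> real" and \<beta> :: "real^2 \<Rightarrow> real"
  assumes P: "prob_space M"
    and Xm: "\<forall>n. X n \<in> borel_measurable M" and gm: "\<forall>n. g n \<in> borel_measurable M"
    and gd: "\<forall>n. distributed M lborel (g n) (erlang_density k 1)"
    and gi: "prob_space.indep_vars M (\<lambda>_. borel) g UNIV"
    and gX: "distr M (Pi\<^sub>M UNIV (\<lambda>_. borel) \<Otimes>\<^sub>M Pi\<^sub>M UNIV (\<lambda>_. borel))
                        (\<lambda>w. ((\<lambda>n. X n w), (\<lambda>n. g n w)))
                    = distr M (Pi\<^sub>M UNIV (\<lambda>_. borel)) (\<lambda>w n. X n w)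
                      \<Otimes>\<^sub>M distr M (Pi\<^sub>M UNIV (\<lambda>_. borel)) (\<lambda>w n. g n w)"
    and bm: "\<beta> \<in> borel_measurable borel" and b0: "\<forall>y. 0 \<le> \<beta> y"
  shows "(\<integral>\<^sup>+w. ennreal (\<Prod>n<K. exp (- \<beta> (X n w) * g n w)) \<partial>M)
       = (\<integral>\<^sup>+w. ennreal (\<Prod>n<K. 1 / (1 + \<beta> (X n w))^Suc k) \<partial>M)"
proof -
  interpret prob_space M by fact
  note Xm' = Xm[rule_format, measurable] and gm' = gm[rule_format, measurable] and bm[measurable]
  define PX where "PX = distr M (Pi\<^sub>M UNIV (\<lambda>_. borel)) (\<lambda>w n. X n w)"
  define Pg where "Pg = distr M (Pi\<^sub>M UNIV (\<lambda>_. borel)) (\<lambda>w n. g n w)"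
  have mX[measurable]: "(\<lambda>w n. X n w) \<in> measurable M (Pi\<^sub>M UNIV (\<lambda>_. borel))"
    by (rule measurable_PiM_single') (auto simp: Xm)
  have mg[measurable]: "(\<lambda>w n. g n w) \<in> measurable M (Pi\<^sub>M UNIV (\<lambda>_. borel :: real measure))"
    by (rule measurable_PiM_single') (auto simp: gm)
  interpret PX: prob_space PX unfolding PX_def by (rule prob_space_distr) (rule mX)
  interpret Pg: prob_space Pg unfolding Pg_def by (rule prob_space_distr) (rule mg)
  define F where "F = (\<lambda>z::(nat\<Rightarrow>real^2)\<times>(nat\<Rightarrow>real). ennreal (\<Prod>n<K. exp (- \<beta> (fst z n) * snd z n)))"
  have Fm0: "F \<in> borel_measurable (Pi\<^sub>M UNIV (\<lambda>_. borel) \<Otimes>\<^sub>M Pi\<^sub>M UNIV (\<lambda>_. borel))"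
    unfolding F_def by measurable
  have sPX: "sets PX = sets (Pi\<^sub>M UNIV (\<lambda>_. borel))" by (simp add: PX_def)
  have sPg: "sets Pg = sets (Pi\<^sub>M UNIV (\<lambda>_. borel))" by (simp add: Pg_def)
  have Fm: "F \<in> borel_measurable (PX \<Otimes>\<^sub>M Pg)"
    using Fm0 by (subst measurable_cong_sets[OF sets_pair_measure_cong[OF sPX sPg] refl])
  have inner: "(\<integral>\<^sup>+h. F (x, h) \<partial>Pg) = ennreal (\<Prod>n<K. 1 / (1 + \<beta> (x n))^Suc k)" for x
  proof -
    have "(\<integral>\<^sup>+h. F (x, h) \<partial>Pg) = (\<integral>\<^sup>+w. ennreal (\<Prod>n<K. exp (- \<beta> (x n) * g n w)) \<partial>M)"
      unfolding Pg_def F_def by (subst nn_integral_distr) auto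
    also have "\<dots> = (\<integral>\<^sup>+w. (\<Prod>n<K. ennreal (exp (- \<beta> (x n) * g n w))) \<partial>M)"
      by (simp add: prod_ennreal)
    also have "\<dots> = (\<Prod>n<K. \<integral>\<^sup>+w. ennreal (exp (- \<beta> (x n) * g n w)) \<partial>M)"
    proof (rule indep_vars_nn_integral)
      have "indep_vars (\<lambda>_. borel) g {..<K}" using gi indep_vars_subset by blast
      then show "indep_vars (\<lambda>_. borel) (\<lambda>n w. ennreal (exp (- \<beta> (x n) * g n w))) {..<K}"
        by (rule indep_vars_compose2) auto
    qed auto
    also have "\<dots> = (\<Prod>n<K. ennreal (1 / (1 + \<beta> (x n))^Suc k))"
    proof (intro prod.cong refl)
      fix n
      have "(\<integral>\<^sup>+w. ennreal (exp (- \<beta> (x n) * g n w)) \<partial>M)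
          = (\<integral>\<^sup>+y. ennreal (erlang_density k 1 y) * ennreal (exp (- \<beta> (x n) * y)) \<partial>lborel)"
        by (rule distributed_nn_integral[symmetric, OF gd[rule_format]]) auto
      also have "\<dots> = ennreal (1 / (1 + \<beta> (x n))^Suc k)"
        by (rule erlang_laplace) (use b0 in auto)
      finally show "(\<integral>\<^sup>+w. ennreal (exp (- \<beta> (x n) * g n w)) \<partial>M) = ennreal (1 / (1 + \<beta> (x n))^Suc k)" .
    qed
    also have "\<dots> = ennreal (\<Prod>n<K. 1 / (1 + \<beta> (x n))^Suc k)"
      using b0 by (simp add: prod_ennreal)
    finally show ?thesis .
  qed
  have "(\<integral>\<^sup>+w. ennreal (\<Prod>n<K. exp (- \<beta> (X n w) * g n w)) \<partial>M)
      = (\<integral>\<^sup>+w. F ((\<lambda>n. X n w), (\<lambda>n. g n w)) \<partial>M)" by (simp add: F_def)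
  also have "\<dots> = (\<integral>\<^sup>+z. F z \<partial>distr M (Pi\<^sub>M UNIV (\<lambda>_. borel) \<Otimes>\<^sub>M Pi\<^sub>M UNIV (\<lambda>_. borel))
                        (\<lambda>w. ((\<lambda>n. X n w), (\<lambda>n. g n w))))"
    by (rule nn_integral_distr[symmetric]) (auto simp: Fm0)
  also have "\<dots> = (\<integral>\<^sup>+z. F z \<partial>(PX \<Otimes>\<^sub>M Pg))"
    using gX by (simp add: PX_def Pg_def)
  also have "\<dots> = (\<integral>\<^sup>+x. \<integral>\<^sup>+h. F (x, h) \<partial>Pg \<partial>PX)"
    by (rule Pg.nn_integral_fst[symmetric]) (rule Fm)
  also have "\<dots> = (\<integral>\<^sup>+x. ennreal (\<Prod>n<K. 1 / (1 + \<beta> (x n))^Suc k) \<partial>PX)"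
    by (simp add: inner)
  also have "\<dots> = (\<integral>\<^sup>+w. ennreal (\<Prod>n<K. 1 / (1 + \<beta> (X n w))^Suc k) \<partial>M)"
    unfolding PX_def by (subst nn_integral_distr) auto
  finally show ?thesis .
qed




definition ann :: "real \<Rightarrow> real \<Rightarrow> nat \<Rightarrow> (real^2) set" where
  "ann \<omega> h j = {y. \<omega>^2 + real j * h < norm y ^ 2 \<and> norm y ^ 2 \<le> \<omega>^2 + real (Suc j) * h}"

definition annidx :: "real \<Rightarrow> real \<Rightarrow> real^2 \<Rightarrow> nat" where
  "annidx \<omega> h y = nat \<lceil>(norm y ^ 2 - \<omega>^2) / h\<rceil> - 1"

lemma annidx_mem:
  assumes w: "\<omega> > 0" and h: "h > 0" and y: "\<omega> < norm y"
  shows "y \<in> ann \<omega> h (annidx \<omega> h y)"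
proof -
  define q where "q = (norm y ^ 2 - \<omega>^2) / h"
  have "\<omega>^2 < norm y ^ 2" using w y by (simp add: power_strict_mono)
  then have qpos: "q > 0" using h by (simp add: q_def)
  then have c1: "\<lceil>q\<rceil> \<ge> 1" by (simp add: ceiling_le_iff[symmetric] zero_less_ceiling) 
  have gen: "\<And>m::int. 1 \<le> m \<Longrightarrow> 1 \<le> nat m" by (metis nat_mono nat_one_as_int)
  have n1: "nat \<lceil>q\<rceil> \<ge> 1" using gen[OF c1] .
  have "real (nat \<lceil>q\<rceil> - 1) = real (nat \<lceil>q\<rceil>) - 1" using n1 by (simp add: of_nat_diff)
  also have "real (nat \<lceil>q\<rceil>) = real_of_int \<lceil>q\<rceil>" using c1 by simp
  finally have j: "real (annidx \<omega> h y) = real_of_int \<lceil>q\<rceil> - 1"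
    by (simp add: annidx_def q_def[symmetric])
  have "real_of_int \<lceil>q\<rceil> - 1 < q" "q \<le> real_of_int \<lceil>q\<rceil>" by linarith+
  then have "real (annidx \<omega> h y) < q" "q \<le> real (annidx \<omega> h y) + 1" using j by auto
  then have "real (annidx \<omega> h y) * h < norm y ^ 2 - \<omega>^2" "norm y ^ 2 - \<omega>^2 \<le> (real (annidx \<omega> h y) + 1) * h"
    using h by (auto simp: q_def field_simps)
  then show ?thesis by (simp add: ann_def algebra_simps)
qed

lemma annidx_eq:
  assumes h: "h > 0" and y: "y \<in> ann \<omega> h j"
  shows "annidx \<omega> h y = j"
proof -
  define q where "q = (norm y ^ 2 - \<omega>^2) / h"
  have "real j * h < norm y ^ 2 - \<omega>^2" "norm y ^ 2 - \<omega>^2 \<le> (real j + 1) * h"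
    using y by (auto simp: ann_def algebra_simps)
  then have "real j < q" "q \<le> real j + 1" using h by (auto simp: q_def field_simps)
  then have "\<lceil>q\<rceil> = int j + 1" by (intro ceiling_unique) auto
  then show ?thesis by (simp add: annidx_def q_def[symmetric] nat_int_add)
qed

lemma ann_norm:
  assumes w: "\<omega> > 0" and h: "h > 0" and y: "y \<in> ann \<omega> h j"
  shows "\<omega> < norm y" "sqrt (\<omega>^2 + real j * h) < norm y" "norm y \<le> sqrt (\<omega>^2 + real (Suc j) * h)"
    "\<omega> \<le> sqrt (\<omega>^2 + real j * h)"
proof -
  have a: "\<omega>^2 + real j * h < norm y ^ 2" "norm y ^ 2 \<le> \<omega>^2 + real (Suc j) * h" using y by (auto simp: ann_def)
  have "\<omega>^2 \<le> \<omega>^2 + real j * h" using h by simp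
  then have "\<omega>^2 < norm y ^ 2" using a by linarith
  then show "\<omega> < norm y" using w by (meson norm_ge_zero power_less_imp_less_base)
  have "sqrt (norm y ^ 2) = norm y" by simp
  then show "sqrt (\<omega>^2 + real j * h) < norm y" using a(1) real_sqrt_less_mono by metis
  show "norm y \<le> sqrt (\<omega>^2 + real (Suc j) * h)" using a(2)
    by (metis norm_ge_zero real_le_rsqrt)
  show "\<omega> \<le> sqrt (\<omega>^2 + real j * h)" using \<open>\<omega>^2 \<le> \<omega>^2 + real j * h\<close> w
    by (simp add: real_le_rsqrt)
qed

lemma ann_disjoint: "h > 0 \<Longrightarrow> disjoint_family (ann \<omega> h)"
  unfolding disjoint_family_on_def using annidx_eq by blast

lemma ann_cball:
  assumes w: "\<omega> > 0" and h: "h > 0"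
  shows "ann \<omega> h j = cball 0 (sqrt (\<omega>^2 + real (Suc j) * h)) - cball 0 (sqrt (\<omega>^2 + real j * h))"
proof -
  have e: "norm y \<le> sqrt A \<longleftrightarrow> norm y ^ 2 \<le> A" if "A \<ge> 0" for y :: "real^2" and A
    using that by (metis norm_ge_zero real_le_rsqrt real_sqrt_le_iff real_sqrt_pow2 real_sqrt_unique)
  have A1: "\<omega>^2 + real j * h \<ge> 0" "\<omega>^2 + real (Suc j) * h \<ge> 0" using h by auto
  show ?thesis unfolding ann_def using e[OF A1(1)] e[OF A1(2)] by (auto simp: not_le)
qed

lemma ann_measure:
  assumes w: "\<omega> > 0" and h: "h > 0"
  shows "measure lborel (ann \<omega> h j) = pi * h" "ann \<omega> h j \<in> sets borel" "bounded (ann \<omega> h j)"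
proof -
  let ?r1 = "sqrt (\<omega>^2 + real (Suc j) * h)" and ?r0 = "sqrt (\<omega>^2 + real j * h)"
  have r: "?r0 \<ge> 0" "?r1 \<ge> 0" "?r0 \<le> ?r1" using h by auto
  have cb: "measure lborel (cball (0::real^2) r) = pi * r^2" if "r \<ge> 0" for r
  proof -
    have "measure lborel (cball (0::real^2) r) = unit_ball_vol (real (2*1)) * r ^ 2"
      using emeasure_cball[OF that, of "0::real^2"] that by (simp add: measure_def)
    moreover have "unit_ball_vol 2 = pi" using unit_ball_vol_even[of 1] by simp
    ultimately show ?thesis by simp
  qed
  have sub: "cball (0::real^2) ?r0 \<subseteq> cball 0 ?r1" by (rule subset_cball[OF r(3)])
  show "measure lborel (ann \<omega> h j) = pi * h"
    unfolding ann_cball[OF w h]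
    apply (subst measure_Diff)
    using sub r h by (auto simp: cb emeasure_cball algebra_simps)
  show "ann \<omega> h j \<in> sets borel" unfolding ann_cball[OF w h] by auto
  show "bounded (ann \<omega> h j)" unfolding ann_cball[OF w h] by (rule bounded_diff) auto
qed

locale philoc =
  fixes \<omega> h :: real and \<Psi> :: "real \<Rightarrow> real" and \<phi> :: "real^2 \<Rightarrow> real"
  assumes w: "\<omega> > 0" and h: "h > 0"
    and Pmono: "\<And>r r'. \<omega> \<le> r \<Longrightarrow> r \<le> r' \<Longrightarrow> \<Psi> r \<le> \<Psi> r'"
    and P01: "\<And>r. \<omega> \<le> r \<Longrightarrow> 0 \<le> \<Psi> r \<and> \<Psi> r \<le> 1"
    and phidef: "\<And>y. \<phi> y = (if \<omega> < norm y then \<Psi> (norm y) else 1)"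
begin

definition "cc j = \<Psi> (sqrt (\<omega>^2 + real j * h))"
definition "dd j = \<Psi> (sqrt (\<omega>^2 + real (Suc j) * h))"

lemma phi01: "0 \<le> \<phi> y" "\<phi> y \<le> 1"
  using P01[of "norm y"] by (auto simp: phidef)

lemma cc01: "0 \<le> cc j" "cc j \<le> 1"
proof -
  have "\<omega> \<le> sqrt (\<omega>^2 + real j * h)" using w h by (simp add: real_le_rsqrt)
  then show "0 \<le> cc j" "cc j \<le> 1" using P01 by (auto simp: cc_def)
qed

lemma dd01: "0 \<le> dd j" "dd j \<le> 1"
proof -
  have "\<omega> \<le> sqrt (\<omega>^2 + real (Suc j) * h)" using w h by (simp add: real_le_rsqrt)
  then show "0 \<le> dd j" "dd j \<le> 1" using P01 by (auto simp: dd_def)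
qed

lemma phi_ann:
  assumes "y \<in> ann \<omega> h j"
  shows "cc j \<le> \<phi> y" "\<phi> y \<le> dd j"
proof -
  note n = ann_norm[OF w h assms]
  have "\<phi> y = \<Psi> (norm y)" using n(1) by (simp add: phidef)
  then show "cc j \<le> \<phi> y" "\<phi> y \<le> dd j" unfolding cc_def dd_def
    using Pmono n by (auto intro: order.trans less_imp_le)
qed

lemma prod_lower:
  fixes x :: "nat \<Rightarrow> real^2"
  assumes fin: "\<And>j. finite {n. x n \<in> ann \<omega> h j}"
    and cov: "\<And>n. n < K \<Longrightarrow> \<omega> < norm (x n) \<Longrightarrow> annidx \<omega> h (x n) < J"
  shows "(\<Prod>j<J. cc j ^ card {n. x n \<in> ann \<omega> h j}) \<le> (\<Prod>n<K. \<phi> (x n))"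
proof -
  define S where "S = {n\<in>{..<K}. \<omega> < norm (x n)}"
  have finS: "finite S" by (simp add: S_def)
  have "(\<Prod>n<K. \<phi> (x n)) = (\<Prod>n\<in>S. \<phi> (x n))"
    by (rule prod.mono_neutral_right) (auto simp: S_def phidef)
  moreover have "(\<Prod>n\<in>S. cc (annidx \<omega> h (x n))) \<le> (\<Prod>n\<in>S. \<phi> (x n))"
  proof (rule prod_mono)
    fix n assume "n \<in> S"
    then have "x n \<in> ann \<omega> h (annidx \<omega> h (x n))" using annidx_mem[OF w h] by (auto simp: S_def)
    then show "0 \<le> cc (annidx \<omega> h (x n)) \<and> cc (annidx \<omega> h (x n)) \<le> \<phi> (x n)"
      using phi_ann cc01 by auto
  qed
  moreover have "(\<Prod>n\<in>S. cc (annidx \<omega> h (x n))) = (\<Prod>j<J. \<Prod>n\<in>{n\<in>S. annidx \<omega> h (x n) = j}. cc (annidx \<omega> h (x n)))"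
    by (rule prod.group[symmetric]) (use finS cov in \<open>auto simp: S_def\<close>)
  moreover have "\<dots> = (\<Prod>j<J. cc j ^ card {n\<in>S. annidx \<omega> h (x n) = j})"
    by (intro prod.cong refl) simp
  moreover have "(\<Prod>j<J. cc j ^ card {n. x n \<in> ann \<omega> h j}) \<le> (\<Prod>j<J. cc j ^ card {n\<in>S. annidx \<omega> h (x n) = j})"
  proof (rule prod_mono)
    fix j
    have "{n\<in>S. annidx \<omega> h (x n) = j} \<subseteq> {n. x n \<in> ann \<omega> h j}"
      using annidx_mem[OF w h] by (auto simp: S_def)
    then have "card {n\<in>S. annidx \<omega> h (x n) = j} \<le> card {n. x n \<in> ann \<omega> h j}"
      by (rule card_mono[OF fin])
    then show "0 \<le> cc j ^ card {n. x n \<in> ann \<omega> h j} \<and> cc j ^ card {n. x n \<in> ann \<omega> h j} \<le> cc j ^ card {n\<in>S. annidx \<omega> h (x n) = j}"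
      using cc01 by (auto intro: power_decreasing)
  qed
  ultimately show ?thesis by linarith
qed

lemma prod_upper:
  fixes x :: "nat \<Rightarrow> real^2"
  assumes fin: "\<And>j. finite {n. x n \<in> ann \<omega> h j}"
    and cov: "\<And>n j. j < J \<Longrightarrow> x n \<in> ann \<omega> h j \<Longrightarrow> n < K"
  shows "(\<Prod>n<K. \<phi> (x n)) \<le> (\<Prod>j<J. dd j ^ card {n. x n \<in> ann \<omega> h j})"
proof -
  define T where "T = (\<Union>j<J. {n. x n \<in> ann \<omega> h j})"
  have finT: "finite T" using fin by (simp add: T_def)
  have TK: "T \<subseteq> {..<K}" using cov by (auto simp: T_def)
  have "(\<Prod>n<K. \<phi> (x n)) = (\<Prod>n\<in>{..<K} - T. \<phi> (x n)) * (\<Prod>n\<in>T. \<phi> (x n))"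
    by (rule prod.subset_diff[OF TK]) simp
  also have "\<dots> \<le> 1 * (\<Prod>n\<in>T. \<phi> (x n))"
    by (intro mult_right_mono prod_le_1 prod_nonneg) (auto simp: phi01)
  also have "\<dots> \<le> (\<Prod>n\<in>T. dd (annidx \<omega> h (x n)))"
  proof (simp, rule prod_mono)
    fix n assume "n \<in> T"
    then obtain j where "x n \<in> ann \<omega> h j" by (auto simp: T_def)
    then show "0 \<le> \<phi> (x n) \<and> \<phi> (x n) \<le> dd (annidx \<omega> h (x n))"
      using phi_ann phi01 annidx_eq[OF h] by auto
  qed
  also have "\<dots> = (\<Prod>j<J. \<Prod>n\<in>{n\<in>T. annidx \<omega> h (x n) = j}. dd (annidx \<omega> h (x n)))"
    by (rule prod.group[symmetric]) (use finT annidx_eq[OF h] in \<open>auto simp: T_def\<close>)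
  also have "\<dots> = (\<Prod>j<J. dd j ^ card {n. x n \<in> ann \<omega> h j})"
  proof (intro prod.cong refl)
    fix j assume "j \<in> {..<J}"
    then have "{n\<in>T. annidx \<omega> h (x n) = j} = {n. x n \<in> ann \<omega> h j}"
      using annidx_eq[OF h] by (auto simp: T_def)
    moreover have "(\<Prod>n\<in>{n. x n \<in> ann \<omega> h j}. dd (annidx \<omega> h (x n))) = (\<Prod>n\<in>{n. x n \<in> ann \<omega> h j}. dd j)"
      by (intro prod.cong) (auto simp: annidx_eq[OF h])
    ultimately show "(\<Prod>n\<in>{n\<in>T. annidx \<omega> h (x n) = j}. dd (annidx \<omega> h (x n))) = dd j ^ card {n. x n \<in> ann \<omega> h j}"
      by simp
  qed
  finally show ?thesis .
qed

end




lemma dec_lim: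
  fixes F :: "nat \<Rightarrow> 'w \<Rightarrow> real"
  assumes P: "prob_space M" and Fm: "\<And>i. F i \<in> borel_measurable M"
    and F01: "\<And>i x. 0 \<le> F i x \<and> F i x \<le> 1" and Fdec: "\<And>i x. F (Suc i) x \<le> F i x"
  shows "\<And>x. (\<lambda>i. F i x) \<longlonglongrightarrow> lim (\<lambda>i. F i x)"
    and "(\<lambda>x. lim (\<lambda>i. F i x)) \<in> borel_measurable M"
    and "(\<lambda>i. integral\<^sup>L M (F i)) \<longlonglongrightarrow> integral\<^sup>L M (\<lambda>x. lim (\<lambda>i. F i x))"
    and "\<And>x i. lim (\<lambda>i. F i x) \<le> F i x"
    and "\<And>x. 0 \<le> lim (\<lambda>i. F i x)"
    and "\<And>i. integrable M (F i)"
    and "integrable M (\<lambda>x. lim (\<lambda>i. F i x))"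
proof -
  interpret prob_space M by fact
  have conv: "(\<lambda>i. F i x) \<longlonglongrightarrow> lim (\<lambda>i. F i x) \<and> (\<forall>i. lim (\<lambda>i. F i x) \<le> F i x)" for x
  proof -
    have "decseq (\<lambda>i. F i x)" using Fdec by (simp add: decseq_Suc_iff)
    then obtain L where L: "(\<lambda>i. F i x) \<longlonglongrightarrow> L" "\<forall>i. L \<le> F i x"
      using decseq_convergent[of "\<lambda>i. F i x" 0] F01 by blast
    then show ?thesis using limI[OF L(1)] by simp
  qed
  show c: "\<And>x. (\<lambda>i. F i x) \<longlonglongrightarrow> lim (\<lambda>i. F i x)" using conv by blast
  show "\<And>x i. lim (\<lambda>i. F i x) \<le> F i x" using conv by blast
  show "\<And>x. 0 \<le> lim (\<lambda>i. F i x)" using c by (rule LIMSEQ_le_const) (use F01 in auto)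
  show lm: "(\<lambda>x. lim (\<lambda>i. F i x)) \<in> borel_measurable M"
    by (rule borel_measurable_LIMSEQ_real[OF c Fm])
  have b: "\<And>i. AE x in M. norm (F i x) \<le> 1" using F01 by auto
  show "(\<lambda>i. integral\<^sup>L M (F i)) \<longlonglongrightarrow> integral\<^sup>L M (\<lambda>x. lim (\<lambda>i. F i x))"
    by (rule integral_dominated_convergence[where w="\<lambda>_. 1" and s=F and f="\<lambda>x. lim (\<lambda>i. F i x)"]) (use lm Fm c b in auto)
  show "\<And>i. integrable M (F i)"
    by (rule integrable_dominated_convergence2[where w="\<lambda>_. 1" and s=F and f="\<lambda>x. lim (\<lambda>i. F i x)"]) (use lm Fm c b in auto)
  show "integrable M (\<lambda>x. lim (\<lambda>i. F i x))"
    by (rule integrable_dominated_convergence[where w="\<lambda>_. 1" and s=F and f="\<lambda>x. lim (\<lambda>i. F i x)"]) (use lm Fm c b in auto)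
qed

locale pploc = philoc +
  fixes M :: "'w measure" and lam :: real and X :: "nat \<Rightarrow> 'w \<Rightarrow> real^2"
  assumes P: "prob_space M" and PPP: "homogeneous_PPP M lam X" and lam: "lam \<ge> 0"
    and phim: "\<phi> \<in> borel_measurable borel"
begin

definition "Nj j w = pp_count X (ann \<omega> h j) w"

lemma PPP_c1: "\<forall>n. X n \<in> borel_measurable M"
  using PPP unfolding homogeneous_PPP_def by (rule conjunct1)

lemma PPP_c2: "\<forall>A \<in> sets borel. bounded A \<longrightarrow>
        (AE w in M. finite {n. X n w \<in> A}) \<and>
        (\<forall>k::nat. measure M {w \<in> space M. pp_count X A w = k}
            = (lam * measure lborel A) ^ k / fact k * exp (- lam * measure lborel A))"
  using PPP unfolding homogeneous_PPP_def by (rule conjunct1[OF conjunct2])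

lemma PPP_c3: "\<forall>(I::nat set) (A::nat \<Rightarrow> (real^2) set). finite I \<longrightarrow>
        (\<forall>i\<in>I. A i \<in> sets borel \<and> bounded (A i)) \<longrightarrow>
        disjoint_family_on A I \<longrightarrow>
        prob_space.indep_vars M (\<lambda>_. count_space UNIV) (\<lambda>i. pp_count X (A i)) I"
  using PPP unfolding homogeneous_PPP_def by (rule conjunct2[OF conjunct2])

lemma Xm[measurable]: "X n \<in> borel_measurable M"
  using PPP_c1 by blast

lemma indep_counts: "prob_space.indep_vars M (\<lambda>_. count_space UNIV) Nj I" if "finite I"
proof -
  have a: "\<forall>i\<in>I. ann \<omega> h i \<in> sets borel \<and> bounded (ann \<omega> h i)" using ann_measure[OF w h] by auto
  have b: "disjoint_family_on (ann \<omega> h) I"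
    using ann_disjoint[OF h] by (auto simp: disjoint_family_on_def)
  have "prob_space.indep_vars M (\<lambda>_. count_space UNIV) (\<lambda>i. pp_count X (ann \<omega> h i)) I"
    using PPP_c3 that a b by blast
  then show ?thesis unfolding Nj_def[abs_def] .
qed

lemma Nj_meas: "Nj j \<in> measurable M (count_space UNIV)"
  using indep_counts[of "{j}"] P by (simp add: prob_space.indep_vars_def)

lemma Nj_dist: "measure M {w\<in>space M. Nj j w = k} = (lam * (pi*h))^k / fact k * exp (- (lam * (pi*h)))"
proof -
  have "measure M {w \<in> space M. pp_count X (ann \<omega> h j) w = k}
            = (lam * measure lborel (ann \<omega> h j)) ^ k / fact k * exp (- lam * measure lborel (ann \<omega> h j))"
    using PPP_c2 ann_measure(2,3)[OF w h, of j] by blast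
  then show ?thesis unfolding Nj_def using ann_measure(1)[OF w h, of j] by simp
qed

lemma AE_fin: "AE w in M. \<forall>j. finite {n. X n w \<in> ann \<omega> h j}"
  unfolding AE_all_countable
proof
  fix j show "AE w in M. finite {n. X n w \<in> ann \<omega> h j}"
    using PPP_c2 ann_measure(2,3)[OF w h, of j] by blast
qed

lemma expect_prod_counts:
  assumes c: "\<And>j. 0 \<le> c j"
  shows "integral\<^sup>L M (\<lambda>w. \<Prod>j<J. c j ^ Nj j w) = (\<Prod>j<J. exp (- lam * (pi*h) * (1 - c j)))"
proof -
  interpret prob_space M by (rule P)
  note Nj_meas[measurable]
  have pm: "(\<lambda>w. \<Prod>j<J. c j ^ Nj j w) \<in> borel_measurable M"
  proof -
    have "(\<lambda>w. c j ^ Nj j w) \<in> borel_measurable M" for j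
      using measurable_compose[OF Nj_meas, of "\<lambda>k. c j ^ k" borel] by (simp add: o_def)
    then show ?thesis by (intro borel_measurable_prod) auto
  qed
  have "(\<integral>\<^sup>+w. ennreal (\<Prod>j<J. c j ^ Nj j w) \<partial>M) = (\<integral>\<^sup>+w. (\<Prod>j<J. ennreal (c j ^ Nj j w)) \<partial>M)"
    using c by (simp add: prod_ennreal)
  also have "\<dots> = (\<Prod>j<J. \<integral>\<^sup>+w. ennreal (c j ^ Nj j w) \<partial>M)"
  proof (rule indep_vars_nn_integral)
    show "indep_vars (\<lambda>_. borel) (\<lambda>j w. ennreal (c j ^ Nj j w)) {..<J}"
      by (rule indep_vars_compose2[OF indep_counts]) auto
  qed auto
  also have "\<dots> = (\<Prod>j<J. ennreal (exp (- (lam * (pi*h)) * (1 - c j))))"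
    by (intro prod.cong refl poisson_pgf[OF P Nj_meas]) (use Nj_dist c lam h in auto)
  also have "\<dots> = ennreal (\<Prod>j<J. exp (- lam * (pi*h) * (1 - c j)))"
    by (simp add: prod_ennreal)
  finally have e: "(\<integral>\<^sup>+w. ennreal (\<Prod>j<J. c j ^ Nj j w) \<partial>M) = ennreal (\<Prod>j<J. exp (- lam * (pi*h) * (1 - c j)))" .
  show ?thesis
    using c by (subst integral_eq_nn_integral) (auto simp: pm e prod_nonneg)
qed

definition "QK K w = (\<Prod>n<K. \<phi> (X n w))"
definition "Qlim w = lim (\<lambda>K. QK K w)"
definition "RJ J w = (\<Prod>j<J. cc j ^ Nj j w)"
definition "Rlim w = lim (\<lambda>J. RJ J w)"
definition "DJ J w = (\<Prod>j<J. dd j ^ Nj j w)"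

lemma QK_meas: "QK K \<in> borel_measurable M"
proof -
  have "(\<lambda>w. \<phi> (X n w)) \<in> borel_measurable M" for n
    using measurable_compose[OF Xm phim] by (simp add: o_def)
  then show ?thesis unfolding QK_def[abs_def] by (intro borel_measurable_prod) auto
qed

lemma RJ_meas: "RJ J \<in> borel_measurable M"
proof -
  have "(\<lambda>w. cc j ^ Nj j w) \<in> borel_measurable M" for j
    using measurable_compose[OF Nj_meas, of "\<lambda>k. cc j ^ k" borel] by (simp add: o_def)
  then show ?thesis unfolding RJ_def[abs_def] by (intro borel_measurable_prod) auto
qed

lemma QK_props: "0 \<le> QK K w \<and> QK K w \<le> 1" "QK (Suc K) w \<le> QK K w"
proof -
  have a: "0 \<le> QK K w" for K unfolding QK_def by (rule prod_nonneg) (simp add: phi01)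
  have b: "QK K w \<le> 1" for K unfolding QK_def by (rule prod_le_1) (simp add: phi01)
  show "0 \<le> QK K w \<and> QK K w \<le> 1" using a b by simp
  have "QK (Suc K) w = \<phi> (X K w) * QK K w" unfolding QK_def by simp
  then show "QK (Suc K) w \<le> QK K w" using a[of K] phi01[of "X K w"] by (simp add: mult_left_le_one_le)
qed

lemma RJ_props: "0 \<le> RJ J w \<and> RJ J w \<le> 1" "RJ (Suc J) w \<le> RJ J w"
proof -
  have a: "0 \<le> RJ J w" for J unfolding RJ_def by (rule prod_nonneg) (simp add: cc01)
  have b: "RJ J w \<le> 1" for J unfolding RJ_def by (rule prod_le_1) (simp add: cc01 power_le_one)
  show "0 \<le> RJ J w \<and> RJ J w \<le> 1" using a b by simp
  have "RJ (Suc J) w = cc J ^ Nj J w * RJ J w" unfolding RJ_def by simp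
  then show "RJ (Suc J) w \<le> RJ J w" using a[of J] cc01[of J] by (simp add: mult_left_le_one_le power_le_one)
qed

lemmas Q_lim = dec_lim[where F=QK, OF P QK_meas QK_props, folded Qlim_def]
lemmas R_lim = dec_lim[where F=RJ, OF P RJ_meas RJ_props, folded Rlim_def]

lemma upper: "integral\<^sup>L M Qlim \<le> (\<Prod>j<J. exp (- lam * (pi*h) * (1 - dd j)))"
proof -
  have "AE w in M. Qlim w \<le> DJ J w"
    using AE_fin
  proof eventually_elim
    case (elim w)
    have "finite (\<Union>j<J. {n. X n w \<in> ann \<omega> h j})" using elim by auto
    from finite_nat_bounded[OF this] obtain K where "(\<Union>j<J. {n. X n w \<in> ann \<omega> h j}) \<subseteq> {..<K}" by blast
    then have K: "\<And>n j. j < J \<Longrightarrow> X n w \<in> ann \<omega> h j \<Longrightarrow> n < K" by auto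
    have "\<forall>K'\<ge>K. QK K' w \<le> DJ J w"
    proof (intro allI impI)
      fix K' assume "K \<le> K'"
      show "QK K' w \<le> DJ J w" unfolding QK_def DJ_def Nj_def pp_count_def
      proof (intro prod_upper)
        show "finite {n. X n w \<in> ann \<omega> h j}" for j using elim by auto
        show "n < K'" if "j < J" "X n w \<in> ann \<omega> h j" for n j
          using K[OF that] \<open>K \<le> K'\<close> by linarith
      qed
    qed
    then show ?case using Q_lim(1)[of w] unfolding Qlim_def by (intro LIMSEQ_le_const2) auto
  qed
  then have "integral\<^sup>L M Qlim \<le> integral\<^sup>L M (DJ J)"
  proof (intro integral_mono_AE)
    show "integrable M Qlim" using Q_lim(7) unfolding Qlim_def[abs_def] .
    have "(\<lambda>w. dd j ^ Nj j w) \<in> borel_measurable M" for j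
      using measurable_compose[OF Nj_meas, of "\<lambda>k. dd j ^ k" borel] by (simp add: o_def)
    then have "DJ J \<in> borel_measurable M" unfolding DJ_def[abs_def] by (intro borel_measurable_prod) auto
    then show "integrable M (DJ J)"
      using P dd01 by (intro finite_measure.integrable_const_bound[where B=1])
        (auto simp: DJ_def prob_space_def prob_space_axioms_def abs_prod prod_nonneg intro!: prod_le_1 power_le_one)
  qed
  also have "integral\<^sup>L M (DJ J) = (\<Prod>j<J. exp (- lam * (pi*h) * (1 - dd j)))"
    unfolding DJ_def using dd01 by (intro expect_prod_counts) auto
  finally show ?thesis .
qed

lemma lower:
  assumes B: "\<And>J. (\<Sum>j<J. pi * h * (1 - cc j)) \<le> B"
  shows "exp (- lam * B) \<le> integral\<^sup>L M Qlim"
proof -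
  have "AE w in M. Rlim w \<le> Qlim w"
    using AE_fin
  proof eventually_elim
    case (elim w)
    have le: "Rlim w \<le> QK K w" for K
    proof -
      have "finite (annidx \<omega> h ` (\<lambda>n. X n w) ` {..<K})" by auto
      from finite_nat_bounded[OF this] obtain J0 where "annidx \<omega> h ` (\<lambda>n. X n w) ` {..<K} \<subseteq> {..<J0}" by blast
      then have J0: "\<And>n. n < K \<Longrightarrow> annidx \<omega> h (X n w) < J0" by auto
      have "\<forall>J\<ge>J0. RJ J w \<le> QK K w"
      proof (intro allI impI)
        fix J assume "J0 \<le> J"
        then show "RJ J w \<le> QK K w" unfolding QK_def RJ_def Nj_def pp_count_def
          by (intro prod_lower) (use elim J0 in \<open>auto intro: less_le_trans\<close>)
      qed
      then show ?thesis using R_lim(1)[of w] unfolding Rlim_def by (intro LIMSEQ_le_const2) auto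
    qed
    show ?case using Q_lim(1)[of w] unfolding Qlim_def by (intro LIMSEQ_le_const) (use le in auto)
  qed
  then have "integral\<^sup>L M Rlim \<le> integral\<^sup>L M Qlim"
    using Q_lim(7) R_lim(7) unfolding Qlim_def[abs_def] Rlim_def[abs_def] by (intro integral_mono_AE) auto
  moreover have "exp (- lam * B) \<le> integral\<^sup>L M Rlim"
  proof -
    have "\<forall>J. exp (- lam * B) \<le> integral\<^sup>L M (RJ J)"
    proof
      fix J
      have "integral\<^sup>L M (RJ J) = (\<Prod>j<J. exp (- lam * (pi*h) * (1 - cc j)))"
        unfolding RJ_def using cc01 by (intro expect_prod_counts) auto
      also have "\<dots> = exp (\<Sum>j<J. - lam * (pi*h) * (1 - cc j))" by (simp add: exp_sum)
      also have "(\<Sum>j<J. - lam * (pi*h) * (1 - cc j)) = - lam * (\<Sum>j<J. pi * h * (1 - cc j))"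
        by (simp add: sum_distrib_left mult_ac)
      finally show "exp (- lam * B) \<le> integral\<^sup>L M (RJ J)"
        using B[of J] lam by (simp add: mult_left_mono)
    qed
    then show ?thesis using R_lim(3) unfolding Rlim_def[abs_def] by (intro LIMSEQ_le_const) auto
  qed
  ultimately show ?thesis by linarith
qed

end




definition fp :: "real \<Rightarrow> nat \<Rightarrow> nat \<Rightarrow> real \<Rightarrow> real" where
  "fp \<delta> N p t = t powr (real p - \<delta> - 1) / (1 + t) ^ N"

definition Bp :: "real \<Rightarrow> nat \<Rightarrow> nat \<Rightarrow> real \<Rightarrow> real" where
  "Bp \<delta> N p z = integral {0..z} (fp \<delta> N p)"

lemma fp_nonneg: "t \<ge> 0 \<Longrightarrow> 0 \<le> fp \<delta> N p t"
  by (simp add: fp_def)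

lemma fp_le: "t \<ge> 0 \<Longrightarrow> fp \<delta> N p t \<le> t powr (real p - \<delta> - 1)"
proof -
  assume t: "t \<ge> 0"
  have "1 \<le> (1 + t) ^ N" using t by (simp add: one_le_power)
  then have "t powr (real p - \<delta> - 1) / (1 + t) ^ N \<le> t powr (real p - \<delta> - 1) / 1"
    by (intro divide_left_mono) auto
  then show ?thesis by (simp add: fp_def)
qed

lemma fp_integrable:
  assumes d: "\<delta> < 1" and p: "p \<ge> 1" and z: "z \<ge> 0"
  shows "fp \<delta> N p integrable_on {0..z}"
proof -
  have e: "real p - \<delta> - 1 > -1" using d p by simp
  have g: "(\<lambda>t. t powr (real p - \<delta> - 1)) absolutely_integrable_on {0..z}"
    by (rule nonnegative_absolutely_integrable_1[OF integrable_on_powr_from_0[OF e z]]) simp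
  have c: "continuous_on {0..z} (\<lambda>t::real. 1 / (1 + t) ^ N)"
    by (intro continuous_intros) auto
  have "(\<lambda>t. 1 / (1 + t) ^ N * t powr (real p - \<delta> - 1)) absolutely_integrable_on {0..z}"
  proof (rule absolutely_integrable_bounded_measurable_product_real)
    show "(\<lambda>t::real. 1 / (1 + t) ^ N) \<in> borel_measurable (lebesgue_on {0..z})"
      by (rule continuous_imp_measurable_on_sets_lebesgue[OF c]) auto
    show "bounded ((\<lambda>t::real. 1 / (1 + t) ^ N) ` {0..z})"
      by (rule compact_imp_bounded, rule compact_continuous_image[OF c]) auto
  qed (use g in auto)
  then have "(\<lambda>t. 1 / (1 + t) ^ N * t powr (real p - \<delta> - 1)) integrable_on {0..z}"
    using set_lebesgue_integral_eq_integral(1) absolutely_integrable_on_def by blast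
  then show ?thesis by (simp add: fp_def[abs_def] field_simps)
qed

lemma Bp_bounds:
  assumes d: "0 < \<delta>" "\<delta> < 1" and p: "p \<ge> 1" and z: "z \<ge> 0"
  shows "0 \<le> Bp \<delta> N p z" "Bp \<delta> N p z \<le> z powr (real p - \<delta>) / (real p - \<delta>)"
proof -
  have e: "real p - \<delta> - 1 > -1" using d p by simp
  show "0 \<le> Bp \<delta> N p z" unfolding Bp_def
    by (rule integral_nonneg[OF fp_integrable[OF d(2) p z]]) (simp add: fp_nonneg)
  have "Bp \<delta> N p z \<le> integral {0..z} (\<lambda>t. t powr (real p - \<delta> - 1))" unfolding Bp_def
    by (rule integral_le[OF fp_integrable[OF d(2) p z] integrable_on_powr_from_0[OF e z]]) (simp add: fp_le)
  also have "\<dots> = z powr (real p - \<delta> - 1 + 1) / (real p - \<delta> - 1 + 1)"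
    by (rule integral_unique[OF has_integral_powr_from_0[OF e z]])
  finally show "Bp \<delta> N p z \<le> z powr (real p - \<delta>) / (real p - \<delta>)" by simp
qed

lemma Bp_deriv:
  assumes d: "\<delta> < 1" and p: "p \<ge> 1" and z: "z > 0"
  shows "(Bp \<delta> N p has_real_derivative fp \<delta> N p z) (at z)"
proof -
  define a where "a = z/2"
  define b where "b = 2*z"
  have ab: "0 < a" "a < z" "z < b" using z by (auto simp: a_def b_def)
  have cont: "continuous_on {a..b} (fp \<delta> N p)"
    unfolding fp_def[abs_def] using ab by (intro continuous_intros) auto
  have d1: "((\<lambda>x. integral {a..x} (fp \<delta> N p)) has_real_derivative fp \<delta> N p z) (at z)"
    using integral_has_real_derivative[OF cont, of z] ab by (simp add: at_within_Icc_at)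
  have d2: "((\<lambda>x. Bp \<delta> N p a + integral {a..x} (fp \<delta> N p)) has_real_derivative fp \<delta> N p z) (at z)"
    using DERIV_add[OF DERIV_const d1] by simp
  show ?thesis
  proof (rule has_field_derivative_transform_within_open[OF d2, of "{a<..}"])
    fix x :: real assume "x \<in> {a<..}"
    then have "a \<le> x" "0 \<le> a" using ab by auto
    then show "Bp \<delta> N p a + integral {a..x} (fp \<delta> N p) = Bp \<delta> N p x"
      unfolding Bp_def
      by (intro Henstock_Kurzweil_Integration.integral_combine fp_integrable[OF d p]) auto
  qed (use ab in auto)
qed

definition Psi :: "real \<Rightarrow> real \<Rightarrow> nat \<Rightarrow> real \<Rightarrow> real" where
  "Psi c \<delta> N r = 1 / (1 + c * r powr (-(2/\<delta>))) ^ N"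

definition Gf :: "real \<Rightarrow> real \<Rightarrow> nat \<Rightarrow> real \<Rightarrow> real" where
  "Gf c \<delta> N v = pi * \<delta> * c powr \<delta> * (\<Sum>p=1..N. real (N choose p) * Bp \<delta> N p (c * v powr (-1/\<delta>)))"

lemma Psi_sqrt: "v > 0 \<Longrightarrow> \<delta> > 0 \<Longrightarrow> Psi c \<delta> N (sqrt v) = 1 / (1 + c * v powr (-1/\<delta>)) ^ N"
proof -
  assume v: "v > 0" and d: "\<delta> > 0"
  have "sqrt v powr (-(2/\<delta>)) = (v powr (1/2)) powr (-(2/\<delta>))" using v by (simp add: powr_half_sqrt)
  also have "\<dots> = v powr (-1/\<delta>)" by (simp add: powr_powr)
  finally show ?thesis by (simp add: Psi_def)
qed

lemma Psi_mono:
  assumes c: "c > 0" and d: "\<delta> > 0" and r: "0 < r" "r \<le> r'"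
  shows "Psi c \<delta> N r \<le> Psi c \<delta> N r'"
proof -
  have "r' powr (-(2/\<delta>)) \<le> r powr (-(2/\<delta>))"
    using r d by (intro powr_mono2') auto
  then have "1 + c * r' powr (-(2/\<delta>)) \<le> 1 + c * r powr (-(2/\<delta>))" using c by simp
  moreover have "0 < 1 + c * r' powr (-(2/\<delta>))" using c by (simp add: add_pos_nonneg)
  ultimately show ?thesis unfolding Psi_def
    by (intro divide_left_mono power_mono mult_pos_pos zero_less_power) auto
qed

lemma Psi01: "c > 0 \<Longrightarrow> 0 \<le> Psi c \<delta> N r \<and> Psi c \<delta> N r \<le> 1"
proof -
  assume c: "c > 0"
  have "1 \<le> 1 + c * r powr (-(2/\<delta>))" using c by simp
  then have "1 \<le> (1 + c * r powr (-(2/\<delta>))) ^ N" by (rule one_le_power)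
  then show ?thesis unfolding Psi_def by simp
qed




lemma term_ident:
  assumes c: "c > 0" and v: "v > 0" and d: "\<delta> > 0"
  defines "z \<equiv> c * v powr (-1/\<delta>)"
  shows "c powr \<delta> * c * z powr (real p - \<delta> - 1) * v powr (-1/\<delta> - 1) = z ^ p"
proof -
  have z: "z > 0" using c v by (simp add: z_def)
  have lz: "ln z = ln c - ln v / \<delta>" using c v by (simp add: z_def ln_mult ln_powr)
  have "c powr \<delta> * c * z powr (real p - \<delta> - 1) * v powr (-1/\<delta> - 1)
      = exp (\<delta> * ln c) * exp (ln c) * exp ((real p - \<delta> - 1) * ln z) * exp ((-1/\<delta> - 1) * ln v)"
    using c v z by (simp add: powr_def)
  also have "\<dots> = exp (\<delta> * ln c + ln c + (real p - \<delta> - 1) * ln z + (-1/\<delta> - 1) * ln v)"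
    by (simp add: exp_add)
  also have "\<delta> * ln c + ln c + (real p - \<delta> - 1) * ln z + (-1/\<delta> - 1) * ln v = real p * ln z"
    using d unfolding lz by (simp add: field_simps)
  also have "exp (real p * ln z) = z ^ p" using z powr_realpow[OF z, of p] by (simp add: powr_def)
  finally show ?thesis .
qed

lemma binom_sum1: "(\<Sum>p=1..N. real (N choose p) * z ^ p) = (1 + z) ^ N - 1"
proof -
  have "(1 + z) ^ N = (z + 1) ^ N" by (simp add: add.commute)
  also have "\<dots> = (\<Sum>k\<le>N. real (N choose k) * z ^ k)" by (simp add: binomial_ring)
  also have "{..N} = insert 0 {1..N}" by auto
  also have "(\<Sum>k\<in>insert 0 {1..N}. real (N choose k) * z ^ k) = 1 + (\<Sum>p=1..N. real (N choose p) * z ^ p)"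
    by (subst sum.insert) auto
  finally show ?thesis by simp
qed

lemma Gf_deriv:
  assumes c: "c > 0" and d: "0 < \<delta>" "\<delta> < 1" and v: "v > 0"
  shows "(Gf c \<delta> N has_real_derivative -(pi * (1 - Psi c \<delta> N (sqrt v)))) (at v)"
proof -
  define z where "z = c * v powr (-1/\<delta>)"
  have z: "z > 0" using c v by (simp add: z_def)
  define zd where "zd = c * ((-1/\<delta>) * v powr (-1/\<delta> - 1))"
  have dz: "((\<lambda>v. c * v powr (-1/\<delta>)) has_real_derivative zd) (at v)"
    unfolding zd_def by (intro DERIV_cmult has_real_derivative_powr v)
  have dp: "((\<lambda>v. real (N choose p) * Bp \<delta> N p (c * v powr (-1/\<delta>))) has_real_derivative
              real (N choose p) * (fp \<delta> N p z * zd)) (at v)" if "p \<in> {1..N}" for p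
  proof -
    have "((\<lambda>v. Bp \<delta> N p (c * v powr (-1/\<delta>))) has_real_derivative fp \<delta> N p z * zd) (at v)"
      using DERIV_chain'[OF dz Bp_deriv[OF d(2) _ z[unfolded z_def]]] that by (simp add: z_def)
    then show ?thesis by (rule DERIV_cmult)
  qed
  have D: "(Gf c \<delta> N has_real_derivative
      pi * \<delta> * c powr \<delta> * (\<Sum>p=1..N. real (N choose p) * (fp \<delta> N p z * zd))) (at v)"
    unfolding Gf_def[abs_def] by (intro DERIV_cmult DERIV_sum dp)
  have t: "pi * \<delta> * c powr \<delta> * (fp \<delta> N p z * zd) = - pi * (z ^ p / (1 + z) ^ N)" for p
  proof -
    have "pi * \<delta> * c powr \<delta> * (fp \<delta> N p z * zd)
        = - pi * (c powr \<delta> * c * z powr (real p - \<delta> - 1) * v powr (-1/\<delta> - 1)) / (1 + z) ^ N"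
      using d by (simp add: fp_def zd_def field_simps)
    also have "\<dots> = - pi * (z ^ p / (1 + z) ^ N)"
      using term_ident[OF c v d(1), of p] by (simp add: z_def)
    finally show ?thesis .
  qed
  have "pi * \<delta> * c powr \<delta> * (\<Sum>p=1..N. real (N choose p) * (fp \<delta> N p z * zd))
      = (\<Sum>p=1..N. real (N choose p) * (pi * \<delta> * c powr \<delta> * (fp \<delta> N p z * zd)))"
    by (simp add: sum_distrib_left mult_ac)
  also have "\<dots> = (\<Sum>p=1..N. real (N choose p) * (- pi * (z ^ p / (1 + z) ^ N)))"
    by (simp only: t)
  also have "\<dots> = - pi * (\<Sum>p=1..N. real (N choose p) * z ^ p) / (1 + z) ^ N"
    by (simp add: sum_distrib_left sum_divide_distrib mult_ac)
  also have "\<dots> = - pi * ((1 + z) ^ N - 1) / (1 + z) ^ N" by (simp only: binom_sum1)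
  also have "\<dots> = -(pi * (1 - Psi c \<delta> N (sqrt v)))"
    using z Psi_sqrt[OF v d(1), of c N] by (simp add: z_def field_simps)
  finally show ?thesis using D by simp
qed

lemma Gf_H1:
  assumes c: "c > 0" and d: "0 < \<delta>" "\<delta> < 1" and v: "0 < v" "v \<le> v'"
  shows "(v' - v) * pi * (1 - Psi c \<delta> N (sqrt v')) \<le> Gf c \<delta> N v - Gf c \<delta> N v'"
    "Gf c \<delta> N v - Gf c \<delta> N v' \<le> (v' - v) * pi * (1 - Psi c \<delta> N (sqrt v))"
proof -
  have "(v' - v) * pi * (1 - Psi c \<delta> N (sqrt v')) \<le> Gf c \<delta> N v - Gf c \<delta> N v'
      \<and> Gf c \<delta> N v - Gf c \<delta> N v' \<le> (v' - v) * pi * (1 - Psi c \<delta> N (sqrt v))"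
  proof (cases "v = v'")
    case True then show ?thesis by simp
  next
    case False
    then have vv: "v < v'" using v by simp
    obtain \<xi> where xi: "v < \<xi>" "\<xi> < v'"
      "Gf c \<delta> N v' - Gf c \<delta> N v = (v' - v) * -(pi * (1 - Psi c \<delta> N (sqrt \<xi>)))"
      using MVT2[OF vv, of "Gf c \<delta> N" "\<lambda>x. -(pi * (1 - Psi c \<delta> N (sqrt x)))"]
        Gf_deriv[OF c d] v by force
    have m1: "Psi c \<delta> N (sqrt v) \<le> Psi c \<delta> N (sqrt \<xi>)"
      using xi v by (intro Psi_mono c d(1)) auto
    have m2: "Psi c \<delta> N (sqrt \<xi>) \<le> Psi c \<delta> N (sqrt v')"
      using xi v by (intro Psi_mono c d(1)) auto
    have e: "Gf c \<delta> N v - Gf c \<delta> N v' = (v' - v) * pi * (1 - Psi c \<delta> N (sqrt \<xi>))"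
      using xi(3) by (simp add: algebra_simps)
    have p: "0 \<le> (v' - v) * pi" using vv by simp
    show ?thesis unfolding e using m1 m2 p
      by (auto intro!: mult_left_mono simp: mult.assoc[symmetric])
  qed
  then show "(v' - v) * pi * (1 - Psi c \<delta> N (sqrt v')) \<le> Gf c \<delta> N v - Gf c \<delta> N v'"
    "Gf c \<delta> N v - Gf c \<delta> N v' \<le> (v' - v) * pi * (1 - Psi c \<delta> N (sqrt v))" by auto
qed

lemma Gf_bound:
  assumes c: "c > 0" and d: "0 < \<delta>" "\<delta> < 1" and v: "v > 0"
  shows "0 \<le> Gf c \<delta> N v"
    "Gf c \<delta> N v \<le> pi * \<delta> * (\<Sum>p=1..N. real (N choose p) * (c ^ p * v powr (-(real p - \<delta>)/\<delta>) / (real p - \<delta>)))"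
proof -
  define z where "z = c * v powr (-1/\<delta>)"
  have z: "z > 0" using c v by (simp add: z_def)
  show "0 \<le> Gf c \<delta> N v" unfolding Gf_def using Bp_bounds(1)[OF d _ less_imp_le[OF z]] d
    by (intro mult_nonneg_nonneg sum_nonneg) (auto simp: z_def)
  have e: "c powr \<delta> * (z powr (real p - \<delta>) / (real p - \<delta>)) = c ^ p * v powr (-(real p - \<delta>)/\<delta>) / (real p - \<delta>)" for p
  proof -
    have "c powr \<delta> * z powr (real p - \<delta>) = c powr \<delta> * (c powr (real p - \<delta>) * (v powr (-1/\<delta>)) powr (real p - \<delta>))"
      using c v by (simp add: z_def powr_mult)
    also have "\<dots> = c powr (\<delta> + (real p - \<delta>)) * v powr (-(real p - \<delta>)/\<delta>)"
    proof -
      have a: "c powr \<delta> * c powr (real p - \<delta>) = c powr (\<delta> + (real p - \<delta>))" by (simp only: powr_add)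
      have b: "(v powr (-1/\<delta>)) powr (real p - \<delta>) = v powr (-(real p - \<delta>)/\<delta>)"
        unfolding powr_powr by (intro arg_cong[where f="\<lambda>e. v powr e"]) (use d in \<open>simp add: field_simps\<close>)
      show ?thesis by (metis a b mult.assoc)
    qed
    also have "\<dots> = c ^ p * v powr (-(real p - \<delta>)/\<delta>)" using c by (simp add: powr_realpow)
    finally show ?thesis by simp
  qed
  have "Gf c \<delta> N v = pi * \<delta> * (\<Sum>p=1..N. real (N choose p) * (c powr \<delta> * Bp \<delta> N p z))"
    unfolding Gf_def z_def by (simp add: sum_distrib_left mult_ac)
  also have "\<dots> \<le> pi * \<delta> * (\<Sum>p=1..N. real (N choose p) * (c powr \<delta> * (z powr (real p - \<delta>) / (real p - \<delta>))))"
    using d Bp_bounds(2)[OF d _ less_imp_le[OF z]]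
    by (intro mult_left_mono sum_mono) auto
  finally show "Gf c \<delta> N v \<le> pi * \<delta> * (\<Sum>p=1..N. real (N choose p) * (c ^ p * v powr (-(real p - \<delta>)/\<delta>) / (real p - \<delta>)))"
    by (simp only: e)
qed

lemma Gf_lim:
  assumes c: "c > 0" and d: "0 < \<delta>" "\<delta> < 1"
  shows "(Gf c \<delta> N \<longlongrightarrow> 0) at_top"
proof (rule tendsto_sandwich[where f="\<lambda>_. 0"])
  show "\<forall>\<^sub>F v in at_top. 0 \<le> Gf c \<delta> N v"
    using eventually_gt_at_top[of 0] by eventually_elim (rule Gf_bound(1)[OF c d])
  show "\<forall>\<^sub>F v in at_top. Gf c \<delta> N v \<le> pi * \<delta> * (\<Sum>p=1..N. real (N choose p) * (c ^ p * v powr (-(real p - \<delta>)/\<delta>) / (real p - \<delta>)))"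
    using eventually_gt_at_top[of 0] by eventually_elim (rule Gf_bound(2)[OF c d])
  have "((\<lambda>v. v powr (-(real p - \<delta>)/\<delta>)) \<longlongrightarrow> 0) at_top" if "p \<in> {1..N}" for p
  proof -
    have "real p - \<delta> > 0" using that d by auto
    then have "-(real p - \<delta>)/\<delta> < 0" using d by (intro divide_neg_pos) auto
    then show ?thesis by (intro tendsto_neg_powr filterlim_ident)
  qed
  then have "((\<lambda>v. pi * \<delta> * (\<Sum>p=1..N. real (N choose p) * (c ^ p * v powr (-(real p - \<delta>)/\<delta>) / (real p - \<delta>)))) \<longlongrightarrow>
       pi * \<delta> * (\<Sum>p=1..N. real (N choose p) * (c ^ p * 0 / (real p - \<delta>)))) at_top"
    using d by (intro tendsto_intros) force+
  then show "((\<lambda>v. pi * \<delta> * (\<Sum>p=1..N. real (N choose p) * (c ^ p * v powr (-(real p - \<delta>)/\<delta>) / (real p - \<delta>)))) \<longlongrightarrow> 0) at_top"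
    by simp
qed simp




lemma neg_powr_cplx:
  assumes Z: "Z > 0" and u: "u \<ge> 0"
  shows "complex_of_real (-(Z*u)) powr complex_of_real e = complex_of_real ((Z*u) powr e) * exp (\<i> * pi * e)"
proof (cases "u = 0")
  case True then show ?thesis by (simp add: powr_of_real_if)
next
  case False
  then have "Z * u > 0" using Z u by simp
  then show ?thesis by (subst powr_of_real_if) simp
qed

lemma stretch01:
  assumes Z: "Z > 0" and d: "\<delta> < 1" and p: "p \<ge> 1"
  shows "((\<lambda>u. Z * fp \<delta> N p (Z * u)) has_integral Bp \<delta> N p Z) {0..1}"
proof -
  have i: "(fp \<delta> N p has_integral Bp \<delta> N p Z) {0..Z}"
    unfolding Bp_def using fp_integrable[OF d p, of Z] Z by (simp add: integrable_integral)
  have img: "(\<lambda>x. x / Z) ` {0..Z} = {0..1::real}"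
  proof
    show "(\<lambda>x. x / Z) ` {0..Z} \<subseteq> {0..1}" using Z by auto
    show "{0..1} \<subseteq> (\<lambda>x. x / Z) ` {0..Z}"
    proof
      fix u :: real assume "u \<in> {0..1}"
      then have "u = (Z * u) / Z" "Z * u \<in> {0..Z}" using Z by (auto simp: mult_le_cancel_left1)
      then show "u \<in> (\<lambda>x. x / Z) ` {0..Z}" by (rule image_eqI)
    qed
  qed
  have "((\<lambda>u. fp \<delta> N p (Z * u)) has_integral (1 / \<bar>Z\<bar>) *\<^sub>R Bp \<delta> N p Z) {0..1}"
    using has_integral_stretch_real[OF i, of Z] Z img by simp
  from has_integral_mult_right[OF this, of Z] show ?thesis using Z by simp
qed

lemma inc_beta_link:
  assumes c: "c > 0" and Z: "Z > 0" and d: "0 < \<delta>" "\<delta> < 1" and p: "p \<ge> 1"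
  shows "complex_of_real (c ^ p) * (complex_of_real (- c)) powr (complex_of_real (\<delta> - real p))
           * inc_beta (complex_of_real (- Z)) (complex_of_real (real p - \<delta>)) (complex_of_real (1 - real N))
         = complex_of_real (c powr \<delta> * Bp \<delta> N p Z)"
proof -
  define E where "E = exp (\<i> * pi * (real p - \<delta> - 1))"
  have eq: "complex_of_real (- Z) * (complex_of_real (- Z) * complex_of_real u) powr (complex_of_real (real p - \<delta>) - 1)
              * (1 - complex_of_real (- Z) * complex_of_real u) powr (complex_of_real (1 - real N) - 1)
            = (- E) * complex_of_real (Z * fp \<delta> N p (Z * u))" if u: "u \<in> {0..1}" for u
  proof -
    have u0: "u \<ge> 0" using u by simp
    have a: "complex_of_real (- Z) * complex_of_real u = complex_of_real (-(Z*u))" by simp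
    have b: "complex_of_real (real p - \<delta>) - 1 = complex_of_real (real p - \<delta> - 1)" by simp
    have c1: "1 - complex_of_real (- Z) * complex_of_real u = complex_of_real (1 + Z*u)" by simp
    have d1: "complex_of_real (1 - real N) - 1 = complex_of_real (- real N)" by simp
    have c2: "1 - complex_of_real (-(Z*u)) = complex_of_real (1 + Z*u)" by simp
    have pos: "1 + Z * u > 0" using Z u0 by (simp add: add_pos_nonneg)
    have e: "(1 + Z*u) powr (- real N) = 1 / (1 + Z*u) ^ N"
      using pos by (simp add: powr_minus powr_realpow divide_inverse)
    have "complex_of_real (- Z) * (complex_of_real (- Z) * complex_of_real u) powr (complex_of_real (real p - \<delta>) - 1)
              * (1 - complex_of_real (- Z) * complex_of_real u) powr (complex_of_real (1 - real N) - 1)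
        = complex_of_real (- Z) * (complex_of_real ((Z*u) powr (real p - \<delta> - 1)) * E)
              * complex_of_real ((1 + Z*u) powr (- real N))"
      unfolding a b c1 c2 d1 neg_powr_cplx[OF Z u0] E_def powr_of_real[OF less_imp_le[OF pos]]
      by (rule refl)
    also have "\<dots> = (- E) * complex_of_real (Z * fp \<delta> N p (Z * u))"
      unfolding e fp_def by (simp add: algebra_simps)
    finally show ?thesis .
  qed
  have hi: "((\<lambda>u. (- E) * complex_of_real (Z * fp \<delta> N p (Z * u))) has_integral
              (- E) * complex_of_real (Bp \<delta> N p Z)) {0..1}"
    by (intro has_integral_mult_right has_integral_of_real stretch01 Z d p)
  have hi2: "((\<lambda>u. complex_of_real (- Z) * (complex_of_real (- Z) * complex_of_real u) powr (complex_of_real (real p - \<delta>) - 1)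
              * (1 - complex_of_real (- Z) * complex_of_real u) powr (complex_of_real (1 - real N) - 1)) has_integral
              (- E) * complex_of_real (Bp \<delta> N p Z)) {0..1}"
    by (rule has_integral_eq[OF _ hi]) (rule eq[symmetric])
  have ib: "inc_beta (complex_of_real (- Z)) (complex_of_real (real p - \<delta>)) (complex_of_real (1 - real N))
      = (- E) * complex_of_real (Bp \<delta> N p Z)"
    unfolding inc_beta_def by (rule integral_unique[OF hi2])
  have ph: "complex_of_real (- c) powr complex_of_real (\<delta> - real p)
      = complex_of_real (c powr (\<delta> - real p)) * exp (\<i> * pi * (\<delta> - real p))"
    using c by (subst powr_of_real_if) simp
  have cc: "c ^ p * c powr (\<delta> - real p) = c powr \<delta>"
    using c by (simp add: powr_realpow[symmetric] powr_add[symmetric])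
  have ee: "exp (\<i> * pi * (\<delta> - real p)) * E = -1"
  proof -
    have "exp (\<i> * pi * (\<delta> - real p)) * E = exp (\<i> * pi * (\<delta> - real p) + \<i> * pi * (real p - \<delta> - 1))"
      unfolding E_def by (simp add: exp_add)
    also have "\<i> * pi * (\<delta> - real p) + \<i> * pi * (real p - \<delta> - 1) = - (\<i> * complex_of_real pi)"
      by (simp add: algebra_simps)
    also have "exp (- (\<i> * complex_of_real pi)) = -1"
      by (simp add: exp_minus)
    finally show ?thesis .
  qed
  have "complex_of_real (c ^ p) * (complex_of_real (- c)) powr (complex_of_real (\<delta> - real p))
           * inc_beta (complex_of_real (- Z)) (complex_of_real (real p - \<delta>)) (complex_of_real (1 - real N))
      = - complex_of_real (c ^ p * c powr (\<delta> - real p)) * (exp (\<i> * pi * (\<delta> - real p)) * E)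
          * complex_of_real (Bp \<delta> N p Z)"
    unfolding ph ib by (simp add: algebra_simps)
  also have "\<dots> = complex_of_real (c powr \<delta> * Bp \<delta> N p Z)"
    unfolding cc ee by simp
  finally show ?thesis .
qed





lemma bounds_h:
  fixes M :: "'w measure" and X :: "nat \<Rightarrow> 'w \<Rightarrow> real^2" and \<phi> :: "real^2 \<Rightarrow> real"
  assumes P: "prob_space M" and PPP: "homogeneous_PPP M lam X" and lam: "lam \<ge> 0"
    and w: "\<omega> > 0" and c: "c > 0" and d: "0 < \<delta>" "\<delta> < 1" and h: "h > 0"
    and phidef: "\<And>y. \<phi> y = (if \<omega> < norm y then Psi c \<delta> N (norm y) else 1)"
    and phim: "\<phi> \<in> borel_measurable borel"
  shows "(\<lambda>K. integral\<^sup>L M (\<lambda>w. \<Prod>n<K. \<phi> (X n w))) \<longlonglongrightarrow> integral\<^sup>L M (\<lambda>w. lim (\<lambda>K. \<Prod>n<K. \<phi> (X n w)))"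
    "exp (- lam * (Gf c \<delta> N (\<omega>^2) + pi * h)) \<le> integral\<^sup>L M (\<lambda>w. lim (\<lambda>K. \<Prod>n<K. \<phi> (X n w)))"
    "integral\<^sup>L M (\<lambda>w. lim (\<lambda>K. \<Prod>n<K. \<phi> (X n w))) \<le> exp (- lam * (Gf c \<delta> N (\<omega>^2) - pi * h))"
proof -
  have Pm: "\<And>r r'. \<omega> \<le> r \<Longrightarrow> r \<le> r' \<Longrightarrow> Psi c \<delta> N r \<le> Psi c \<delta> N r'"
  proof -
    fix r r' :: real assume "\<omega> \<le> r" "r \<le> r'"
    then show "Psi c \<delta> N r \<le> Psi c \<delta> N r'" using w by (intro Psi_mono[OF c d(1)]) auto
  qed
  have P01': "\<And>r. \<omega> \<le> r \<Longrightarrow> 0 \<le> Psi c \<delta> N r \<and> Psi c \<delta> N r \<le> 1" using Psi01[OF c] by blast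
  interpret pploc \<omega> h "Psi c \<delta> N" \<phi> M lam X
    by (intro pploc.intro philoc.intro pploc_axioms.intro) (fact w h Pm P01' phidef P PPP lam phim)+
  have Qeq: "Qlim = (\<lambda>w. lim (\<lambda>K. \<Prod>n<K. \<phi> (X n w)))" by (simp add: Qlim_def[abs_def] QK_def[abs_def])
  have QKeq: "QK K = (\<lambda>w. \<Prod>n<K. \<phi> (X n w))" for K by (simp add: QK_def[abs_def])
  show "(\<lambda>K. integral\<^sup>L M (\<lambda>w. \<Prod>n<K. \<phi> (X n w))) \<longlonglongrightarrow> integral\<^sup>L M (\<lambda>w. lim (\<lambda>K. \<Prod>n<K. \<phi> (X n w)))"
    using Q_lim(3) unfolding Qeq[symmetric] QKeq[symmetric] Qlim_def[abs_def] .
  define G where "G = Gf c \<delta> N"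
  define u where "u j = \<omega>^2 + real j * h" for j
  have u0: "u 0 = \<omega>^2" by (simp add: u_def)
  have upos: "0 < u j" for j using w h by (simp add: u_def add_pos_nonneg)
  have uS: "u (Suc j) - u j = h" for j by (simp add: u_def algebra_simps)
  have umono: "u j \<le> u (Suc j)" for j using h by (simp add: u_def)
  have H1a: "h * pi * (1 - Psi c \<delta> N (sqrt (u (Suc j)))) \<le> G (u j) - G (u (Suc j))" for j
    using Gf_H1(1)[OF c d upos[of j] umono[of j], where N=N] uS[of j] by (simp add: G_def)
  have H1b: "G (u j) - G (u (Suc j)) \<le> h * pi * (1 - Psi c \<delta> N (sqrt (u j)))" for j
    using Gf_H1(2)[OF c d upos[of j] umono[of j], where N=N] uS[of j] by (simp add: G_def)
  have G0: "0 \<le> G (u j)" for j using Gf_bound(1)[OF c d upos[of j], where N=N] by (simp add: G_def)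
  have P1: "1 - Psi c \<delta> N r \<le> 1" for r using Psi01[OF c, of \<delta> N r] by simp
  have P0: "0 \<le> 1 - Psi c \<delta> N r" for r using Psi01[OF c, of \<delta> N r] by simp
  have dd_eq: "dd j = Psi c \<delta> N (sqrt (u (Suc j)))" for j by (simp add: dd_def u_def)
  have cc_eq: "cc j = Psi c \<delta> N (sqrt (u j))" for j by (simp add: cc_def u_def)
  have up1: "integral\<^sup>L M Qlim \<le> exp (- lam * (G (u 1) - G (u (Suc J))))" for J
  proof -
    have "(\<Sum>j<J. G (u (Suc j)) - G (u (Suc (Suc j)))) \<le> (\<Sum>j<J. pi * h * (1 - dd j))"
      by (intro sum_mono) (use H1b dd_eq in \<open>simp add: mult_ac\<close>)
    moreover have "(\<Sum>j<J. G (u (Suc j)) - G (u (Suc (Suc j)))) = G (u 1) - G (u (Suc J))"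
      by (induction J) auto
    ultimately have s: "G (u 1) - G (u (Suc J)) \<le> (\<Sum>j<J. pi * h * (1 - dd j))" by simp
    have "integral\<^sup>L M Qlim \<le> (\<Prod>j<J. exp (- lam * (pi*h) * (1 - dd j)))" by (rule upper)
    also have "\<dots> = exp (- lam * (\<Sum>j<J. pi * h * (1 - dd j)))"
      by (simp add: exp_sum[symmetric] sum_distrib_left mult_ac)
    also have "\<dots> \<le> exp (- lam * (G (u 1) - G (u (Suc J))))"
      using s lam by (simp add: mult_left_mono)
    finally show ?thesis .
  qed
  have r1: "filterlim (\<lambda>J. real (Suc J)) at_top sequentially"
    by (rule filterlim_compose[OF filterlim_real_sequentially filterlim_Suc])
  have r2: "filterlim (\<lambda>J. h * real (Suc J)) at_top sequentially"
    by (rule filterlim_tendsto_pos_mult_at_top[OF tendsto_const h r1])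
  have r3: "filterlim (\<lambda>J. \<omega>^2 + h * real (Suc J)) at_top sequentially"
    by (rule filterlim_tendsto_add_at_top[OF tendsto_const r2])
  have ulim: "filterlim (\<lambda>J. u (Suc J)) at_top sequentially"
    using r3 by (simp add: u_def mult.commute)
  have Glim: "(\<lambda>J. G (u (Suc J))) \<longlonglongrightarrow> 0"
    unfolding G_def by (rule filterlim_compose[OF Gf_lim[OF c d] ulim])
  have "(\<lambda>J. exp (- lam * (G (u 1) - G (u (Suc J))))) \<longlonglongrightarrow> exp (- lam * (G (u 1) - 0))"
    by (intro tendsto_intros Glim)
  then have lim1: "(\<lambda>J. exp (- lam * (G (u 1) - G (u (Suc J))))) \<longlonglongrightarrow> exp (- lam * G (u 1))" by simp
  have up2: "integral\<^sup>L M Qlim \<le> exp (- lam * G (u 1))"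
    by (rule LIMSEQ_le_const[OF lim1]) (use up1 in auto)
  have "h * pi * (1 - Psi c \<delta> N (sqrt (u 0))) \<le> h * pi"
    by (rule mult_left_le[OF P1]) (use h in simp)
  then have "G (u 0) - G (u 1) \<le> h * pi" using H1b[of 0] by simp
  then have "G (u 0) - pi * h \<le> G (u 1)" by (simp add: mult.commute)
  then have "lam * (G (u 0) - pi * h) \<le> lam * G (u 1)" using lam by (rule mult_left_mono)
  then have ex: "exp (- lam * G (u 1)) \<le> exp (- lam * (G (u 0) - pi * h))" by simp
  have "integral\<^sup>L M Qlim \<le> exp (- lam * (G (u 0) - pi * h))" using up2 ex by (rule order_trans)
  then show "integral\<^sup>L M (\<lambda>w. lim (\<lambda>K. \<Prod>n<K. \<phi> (X n w))) \<le> exp (- lam * (Gf c \<delta> N (\<omega>^2) - pi * h))"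
    unfolding Qeq G_def u0 .
  have B: "(\<Sum>j<J. pi * h * (1 - cc j)) \<le> pi * h + G (u 0)" for J
  proof -
    have nn: "0 \<le> pi * h * (1 - cc J)" unfolding cc_eq using P0[of "sqrt (u J)"] h
      by (intro mult_nonneg_nonneg) auto
    have "(\<Sum>j<J. pi * h * (1 - cc j)) \<le> (\<Sum>j<Suc J. pi * h * (1 - cc j))"
      using nn by (simp add: sum.lessThan_Suc)
    also have "\<dots> = pi * h * (1 - cc 0) + (\<Sum>j<J. pi * h * (1 - cc (Suc j)))"
      by (rule sum.lessThan_Suc_shift)
    also have "\<dots> \<le> pi * h + (\<Sum>j<J. G (u j) - G (u (Suc j)))"
    proof (intro add_mono sum_mono)
      show "pi * h * (1 - cc 0) \<le> pi * h" using P1 cc_eq h by (simp add: mult_left_le)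
      show "pi * h * (1 - cc (Suc j)) \<le> G (u j) - G (u (Suc j))" for j
        using H1a[of j] cc_eq by (simp add: mult_ac)
    qed
    also have "(\<Sum>j<J. G (u j) - G (u (Suc j))) = G (u 0) - G (u J)"
      by (induction J) auto
    also have "pi * h + (G (u 0) - G (u J)) \<le> pi * h + G (u 0)" using G0 by simp
    finally show ?thesis .
  qed
  have "exp (- lam * (pi * h + G (u 0))) \<le> integral\<^sup>L M Qlim" by (rule lower[OF B])
  then show "exp (- lam * (Gf c \<delta> N (\<omega>^2) + pi * h)) \<le> integral\<^sup>L M (\<lambda>w. lim (\<lambda>K. \<Prod>n<K. \<phi> (X n w)))"
    unfolding Qeq G_def u0 by (simp add: add.commute)
qed

lemma pp_limit:
  fixes M :: "'w measure" and X :: "nat \<Rightarrow> 'w \<Rightarrow> real^2" and \<phi> :: "real^2 \<Rightarrow> real"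
  assumes P: "prob_space M" and PPP: "homogeneous_PPP M lam X" and lam: "lam \<ge> 0"
    and w: "\<omega> > 0" and c: "c > 0" and d: "0 < \<delta>" "\<delta> < 1"
    and phidef: "\<And>y. \<phi> y = (if \<omega> < norm y then Psi c \<delta> N (norm y) else 1)"
    and phim: "\<phi> \<in> borel_measurable borel"
  shows "(\<lambda>K. integral\<^sup>L M (\<lambda>w. \<Prod>n<K. \<phi> (X n w))) \<longlonglongrightarrow> exp (- lam * Gf c \<delta> N (\<omega>^2))"
proof -
  note b = bounds_h[OF P PPP lam w c d _ phidef phim]
  let ?E = "integral\<^sup>L M (\<lambda>w. lim (\<lambda>K. \<Prod>n<K. \<phi> (X n w)))"
  let ?G = "Gf c \<delta> N (\<omega>^2)"
  have "((\<lambda>h. exp (- lam * (?G + pi * h))) \<longlongrightarrow> exp (- lam * (?G + pi * 0))) (at_right 0)"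
    by (intro tendsto_intros)
  then have t1: "((\<lambda>h. exp (- lam * (?G + pi * h))) \<longlongrightarrow> exp (- lam * ?G)) (at_right 0)" by simp
  have "((\<lambda>h. exp (- lam * (?G - pi * h))) \<longlongrightarrow> exp (- lam * (?G - pi * 0))) (at_right 0)"
    by (intro tendsto_intros)
  then have t2: "((\<lambda>h. exp (- lam * (?G - pi * h))) \<longlongrightarrow> exp (- lam * ?G)) (at_right 0)" by simp
  have ev1: "\<forall>\<^sub>F h in at_right 0. exp (- lam * (?G + pi * h)) \<le> ?E"
    using eventually_at_right_less[of 0] by eventually_elim (rule b(2))
  have ev2: "\<forall>\<^sub>F h in at_right 0. ?E \<le> exp (- lam * (?G - pi * h))"
    using eventually_at_right_less[of 0] by eventually_elim (rule b(3))
  have "exp (- lam * ?G) \<le> ?E"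
    by (rule tendsto_le[OF trivial_limit_at_right_real tendsto_const t1 ev1])
  moreover have "?E \<le> exp (- lam * ?G)"
    by (rule tendsto_le[OF trivial_limit_at_right_real t2 tendsto_const ev2])
  ultimately have "?E = exp (- lam * ?G)" by simp
  with b(1)[OF zero_less_one] show ?thesis by simp
qed




lemma erlang_nonneg_AE:
  assumes P: "prob_space M" and D: "distributed M lborel G (erlang_density k 1)"
  shows "AE w in M. 0 \<le> G w"
  by (subst prob_space.distributed_AE2[OF P D]) (auto simp: erlang_density_def)

lemma nn_to_int:
  fixes f g :: "'a \<Rightarrow> real"
  assumes "f \<in> borel_measurable M" "g \<in> borel_measurable M"
    and "\<And>x. 0 \<le> f x" "\<And>x. 0 \<le> g x"
    and "(\<integral>\<^sup>+x. ennreal (f x) \<partial>M) = (\<integral>\<^sup>+x. ennreal (g x) \<partial>M)"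
  shows "integral\<^sup>L M f = integral\<^sup>L M g"
  using assms by (simp add: integral_eq_nn_integral)

lemma series_pos:
  fixes t :: "nat \<Rightarrow> real"
  assumes t: "\<And>n. 0 \<le> t n" and s: "s > 0"
    and L: "\<And>K. L \<le> exp (- s * (\<Sum>n<K. t n))" and Lp: "0 < L"
  shows "summable t"
proof (rule summableI_nonneg_bounded[OF t])
  fix K
  have "ln L \<le> ln (exp (- s * (\<Sum>n<K. t n)))" using L[of K] Lp by (subst ln_le_cancel_iff) auto
  then have "ln L \<le> - s * (\<Sum>n<K. t n)" by simp
  then show "(\<Sum>n<K. t n) \<le> - ln L / s" using s by (simp add: field_simps)
qed

lemma series_lim:
  fixes t :: "nat \<Rightarrow> real"
  assumes "summable t"
  shows "(\<lambda>K. exp (- s * (\<Sum>n<K. t n))) \<longlonglongrightarrow> exp (- s * suminf t)"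
  by (intro tendsto_intros summable_LIMSEQ assms)




theorem lemma3:
  fixes M :: "'w measure"
    and X :: "nat \<Rightarrow> 'w \<Rightarrow> real^2"
    and g :: "nat \<Rightarrow> 'w \<Rightarrow> real"
    and k N Mant :: nat
    and x0 s lam1 P1 Pk Bk eta ank alpha1 alphak :: real
  assumes "prob_space M"
    and "k \<ge> 2" and "x0 > 0" and "s > 0"
    and "N \<ge> 2" and "Mant > N"
    and "lam1 > 0" and "P1 > 0" and "Pk > 0" and "Bk > 0" and "eta > 0" and "ank > 0"
    and "alpha1 > 2" and "alphak > 2"
    and PPP: "homogeneous_PPP M lam1 X"
    and g_meas: "\<forall>n. g n \<in> borel_measurable M"
    and g_gamma: "\<forall>n. distributed M lborel (g n) (erlang_density (N - 1) 1)"
    and g_iid: "prob_space.indep_vars M (\<lambda>_. borel) g UNIV"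
    and g_indep_X: "distr M (Pi\<^sub>M UNIV (\<lambda>_. borel) \<Otimes>\<^sub>M Pi\<^sub>M UNIV (\<lambda>_. borel))
                        (\<lambda>w. ((\<lambda>n. X n w), (\<lambda>n. g n w)))
                    = distr M (Pi\<^sub>M UNIV (\<lambda>_. borel)) (\<lambda>w n. X n w)
                      \<Otimes>\<^sub>M distr M (Pi\<^sub>M UNIV (\<lambda>_. borel)) (\<lambda>w n. g n w)"
  shows
    "let delta1 = 2 / alpha1;
         GM = real Mant - real N + 1;
         P1k = P1 / Pk;
         omega = (P1k * GM / (ank * Bk * real N)) powr (delta1 / 2) * x0 powr (alphak / alpha1);
         I = (\<lambda>w. \<Sum>n. (if norm (X n w) > omega
                         then P1 / real N * g n w * eta * norm (X n w) powr (- alpha1) else 0));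
         c = s * P1 / real N * eta
     in complex_of_real (prob_space.expectation M (\<lambda>w. exp (- s * I w)))
        = exp (- complex_of_real (lam1 * pi * delta1) *
            (\<Sum>p=1..N. of_nat (N choose p) * complex_of_real (c ^ p)
               * (complex_of_real (- c)) powr (complex_of_real (delta1 - real p))
               * inc_beta (complex_of_real (- c * omega powr (- alpha1)))
                          (complex_of_real (real p - delta1)) (complex_of_real (1 - real N))))"
proof -
  note P = assms(1)
  interpret prob_space M by (rule P)
  have Xm[measurable]: "X n \<in> borel_measurable M" for n
    using PPP unfolding homogeneous_PPP_def by blast
  have gm[measurable]: "g n \<in> borel_measurable M" for n using g_meas by blast
  define delta1 where "delta1 = 2 / alpha1"
  define GM where "GM = real Mant - real N + 1"
  define P1k where "P1k = P1 / Pk"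
  define omega where "omega = (P1k * GM / (ank * Bk * real N)) powr (delta1 / 2) * x0 powr (alphak / alpha1)"
  define tm where "tm n w = (if norm (X n w) > omega
                         then P1 / real N * g n w * eta * norm (X n w) powr (- alpha1) else 0)" for n w
  define I where "I = (\<lambda>w. \<Sum>n. tm n w)"
  define c where "c = s * P1 / real N * eta"
  define a where "a = P1 / real N * eta"
  have N1: "N \<ge> 1" "real N > 0" using assms(5) by auto
  have a0: "a > 0" using assms N1 by (simp add: a_def)
  have c0: "c > 0" using assms N1 by (simp add: c_def)
  have ca: "c = s * a" by (simp add: c_def a_def)
  have GM0: "GM > 0" using assms(6) by (simp add: GM_def)
  have om: "omega > 0" unfolding omega_def using assms GM0 N1 by (simp add: P1k_def)
  have dd: "0 < delta1" "delta1 < 1" using assms(13) by (auto simp: delta1_def)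
  have al: "2 / delta1 = alpha1" using assms(13) by (simp add: delta1_def)
  have tmm[measurable]: "tm n \<in> borel_measurable M" for n unfolding tm_def by measurable
  define beta :: "real \<Rightarrow> real^2 \<Rightarrow> real" where "beta s' y = (if omega < norm y then s' * a * norm y powr (- alpha1) else 0)" for s' y
  define phi :: "real \<Rightarrow> real^2 \<Rightarrow> real" where "phi s' y = 1 / (1 + beta s' y) ^ Suc (N - 1)" for s' y
  have betam: "beta s' \<in> borel_measurable borel" for s' unfolding beta_def[abs_def] by measurable
  have beta0: "s' > 0 \<Longrightarrow> 0 \<le> beta s' y" for s' y using a0 by (simp add: beta_def)
  have phim: "phi s' \<in> borel_measurable borel" for s'
    unfolding phi_def[abs_def] using betam[of s'] by measurable
  have phidef: "phi s' y = (if omega < norm y then Psi (s' * a) delta1 N (norm y) else 1)" for s' y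
    using N1 al by (simp add: phi_def beta_def Psi_def)
  have tm_beta: "s' * tm n w = beta s' (X n w) * g n w" for s' n w
    by (simp add: tm_def beta_def a_def)
  have lim_s: "(\<lambda>K. integral\<^sup>L M (\<lambda>w. exp (- s' * (\<Sum>n<K. tm n w)))) \<longlonglongrightarrow> exp (- lam1 * Gf (s' * a) delta1 N (omega^2))"
    if s': "s' > 0" for s'
  proof -
    have eqK: "integral\<^sup>L M (\<lambda>w. exp (- s' * (\<Sum>n<K. tm n w))) = integral\<^sup>L M (\<lambda>w. \<Prod>n<K. phi s' (X n w))" for K
    proof -
      have e1: "exp (- s' * (\<Sum>n<K. tm n w)) = (\<Prod>n<K. exp (- beta s' (X n w) * g n w))" for w
      proof -
        have "s' * (\<Sum>n<K. tm n w) = (\<Sum>n<K. beta s' (X n w) * g n w)"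
          by (simp add: sum_distrib_left tm_beta)
        then have "- s' * (\<Sum>n<K. tm n w) = (\<Sum>n<K. - beta s' (X n w) * g n w)"
          by (simp add: sum_negf)
        then show ?thesis by (simp add: exp_sum)
      qed
      have eq: "(\<integral>\<^sup>+w. ennreal (\<Prod>n<K. exp (- beta s' (X n w) * g n w)) \<partial>M)
          = (\<integral>\<^sup>+w. ennreal (\<Prod>n<K. 1 / (1 + beta s' (X n w))^Suc (N - 1)) \<partial>M)"
        by (rule cond_marks[OF P _ g_meas g_gamma g_iid g_indep_X betam]) (use beta0 s' PPP homogeneous_PPP_def in auto)
      note betam[measurable]
      have mA: "(\<lambda>w. \<Prod>n<K. exp (- beta s' (X n w) * g n w)) \<in> borel_measurable M" by measurable
      have mB: "(\<lambda>w. \<Prod>n<K. 1 / (1 + beta s' (X n w))^Suc (N - 1)) \<in> borel_measurable M" by measurable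
      have "integral\<^sup>L M (\<lambda>w. \<Prod>n<K. exp (- beta s' (X n w) * g n w))
          = integral\<^sup>L M (\<lambda>w. \<Prod>n<K. 1 / (1 + beta s' (X n w))^Suc (N - 1))"
        by (rule nn_to_int[OF mA mB _ _ eq]) (use beta0 s' in \<open>auto intro!: prod_nonneg\<close>)
      then show ?thesis unfolding e1 phi_def .
    qed
    have "(\<lambda>K. integral\<^sup>L M (\<lambda>w. \<Prod>n<K. phi s' (X n w))) \<longlonglongrightarrow> exp (- lam1 * Gf (s' * a) delta1 N (omega^2))"
      by (rule pp_limit[OF P PPP _ om _ dd phidef phim]) (use assms(7) s' a0 in auto)
    then show ?thesis unfolding eqK .
  qed
  have AEg: "AE w in M. \<forall>n. 0 \<le> g n w"
    unfolding AE_all_countable using erlang_nonneg_AE[OF P] g_gamma by blast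
  have AEt: "AE w in M. \<forall>n. 0 \<le> tm n w"
    using AEg
  proof eventually_elim
    case (elim w)
    show ?case
    proof
      fix n
      have "0 \<le> P1 / real N * g n w * eta * norm (X n w) powr (- alpha1)"
        using elim assms(8,11) N1 by (intro mult_nonneg_nonneg divide_nonneg_nonneg) auto
      then show "0 \<le> tm n w" by (simp add: tm_def)
    qed
  qed
  define F where "F s' K w = exp (- s' * (\<Sum>n<K. max 0 (tm n w)))" for s' K w
  define Lam where "Lam s' w = lim (\<lambda>K. F s' K w)" for s' w
  have Fm: "F s' K \<in> borel_measurable M" for s' K unfolding F_def by measurable
  have F01: "0 \<le> F s' K w \<and> F s' K w \<le> 1" if "s' > 0" for s' K w
    using that by (auto simp: F_def intro!: sum_nonneg mult_nonneg_nonneg)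
  have Fdec: "F s' (Suc K) w \<le> F s' K w" if "s' > 0" for s' K w
    using that by (auto simp: F_def intro!: mult_left_mono)
  have ELam: "integral\<^sup>L M (Lam s') = exp (- lam1 * Gf (s' * a) delta1 N (omega^2))" if s': "s' > 0" for s'
  proof -
    have "integral\<^sup>L M (F s' K) = integral\<^sup>L M (\<lambda>w. exp (- s' * (\<Sum>n<K. tm n w)))" for K
    proof (rule integral_cong_AE)
      show "F s' K \<in> borel_measurable M" by (rule Fm)
      show "(\<lambda>w. exp (- s' * (\<Sum>n<K. tm n w))) \<in> borel_measurable M" by measurable
      show "AE w in M. F s' K w = exp (- s' * (\<Sum>n<K. tm n w))"
        using AEt by eventually_elim (simp add: F_def)
    qed
    then have "(\<lambda>K. integral\<^sup>L M (F s' K)) \<longlonglongrightarrow> exp (- lam1 * Gf (s' * a) delta1 N (omega^2))"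
      using lim_s[OF s'] by simp
    moreover have "(\<lambda>K. integral\<^sup>L M (F s' K)) \<longlonglongrightarrow> integral\<^sup>L M (Lam s')"
      using dec_lim(3)[where F="F s'", OF P Fm F01[OF s'] Fdec[OF s']] unfolding Lam_def[abs_def] .
    ultimately show ?thesis using LIMSEQ_unique by metis
  qed
  define Sm where "Sm = {w \<in> space M. summable (\<lambda>n. max 0 (tm n w))}"
  have Sm_eq: "Sm = {w \<in> space M. 0 < Lam s' w}" if s': "s' > 0" for s'
  proof (intro set_eqI iffI)
    fix w assume "w \<in> Sm"
    then have sm: "summable (\<lambda>n. max 0 (tm n w))" and w: "w \<in> space M" by (auto simp: Sm_def)
    have "(\<lambda>K. F s' K w) \<longlonglongrightarrow> exp (- s' * suminf (\<lambda>n. max 0 (tm n w)))"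
      unfolding F_def by (rule series_lim[OF sm])
    then have "Lam s' w = exp (- s' * suminf (\<lambda>n. max 0 (tm n w)))"
      unfolding Lam_def by (rule limI)
    then show "w \<in> {w \<in> space M. 0 < Lam s' w}" using w by simp
  next
    fix w assume "w \<in> {w \<in> space M. 0 < Lam s' w}"
    then have pos: "0 < Lam s' w" and w: "w \<in> space M" by auto
    have "summable (\<lambda>n. max 0 (tm n w))"
      by (rule series_pos[OF _ s' _ pos]) (use dec_lim(4)[where F="F s'", OF P Fm F01[OF s'] Fdec[OF s']] in \<open>auto simp: F_def Lam_def\<close>)
    then show "w \<in> Sm" using w by (simp add: Sm_def)
  qed
  have Lam1m: "Lam 1 \<in> borel_measurable M" using dec_lim(2)[where F="F 1", OF P Fm F01[OF zero_less_one] Fdec[OF zero_less_one]] unfolding Lam_def[abs_def] by simp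
  have Sm_sets: "Sm \<in> sets M" unfolding Sm_eq[OF zero_less_one] using Lam1m by measurable
  have Sm_ge: "exp (- lam1 * Gf (s' * a) delta1 N (omega^2)) \<le> prob Sm" if s': "s' > 0" for s'
  proof -
    have "integral\<^sup>L M (Lam s') \<le> integral\<^sup>L M (indicator Sm :: 'w \<Rightarrow> real)"
    proof (rule integral_mono)
      show "integrable M (Lam s')" using dec_lim(7)[where F="F s'", OF P Fm F01[OF s'] Fdec[OF s']] unfolding Lam_def[abs_def] .
      show "integrable M (indicator Sm :: 'w \<Rightarrow> real)"
        by (rule integrable_real_indicator[OF Sm_sets]) (simp add: less_top[symmetric])
      fix w assume w: "w \<in> space M"
      have "Lam s' w \<le> F s' 0 w" using dec_lim(4)[where F="F s'", OF P Fm F01[OF s'] Fdec[OF s']] by (simp add: Lam_def)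
      then have "Lam s' w \<le> 1" by (simp add: F_def)
      moreover have "w \<notin> Sm \<Longrightarrow> Lam s' w \<le> 0" using w Sm_eq[OF s'] by auto
      ultimately show "Lam s' w \<le> indicator Sm w" by (auto split: split_indicator)
    qed
    also have "\<dots> = prob Sm" using Sm_sets sets.Int_space_eq2 by simp
    finally show ?thesis using ELam[OF s'] by simp
  qed
  define B where "B s' = pi * delta1 * (\<Sum>p=1..N. real (N choose p) * ((s' * a) ^ p * (omega^2) powr (-(real p - delta1)/delta1) / (real p - delta1)))" for s'
  have GB: "0 \<le> Gf (s' * a) delta1 N (omega^2) \<and> Gf (s' * a) delta1 N (omega^2) \<le> B s'" if "s' > 0" for s'
    using Gf_bound[OF _ dd, of "s' * a" "omega^2" N] that a0 om by (simp add: B_def)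
  have "(B \<longlongrightarrow> B 0) (at_right 0)" unfolding B_def by (intro tendsto_intros) (use dd in force)+
  moreover have "B 0 = 0" unfolding B_def using N1 by (intro mult_eq_0_iff[THEN iffD2] disjI2 sum.neutral) auto
  ultimately have Blim: "(B \<longlongrightarrow> 0) (at_right 0)" by simp
  have Glim: "((\<lambda>s'. Gf (s' * a) delta1 N (omega^2)) \<longlongrightarrow> 0) (at_right 0)"
  proof (rule tendsto_sandwich[OF _ _ tendsto_const Blim])
    show "\<forall>\<^sub>F s' in at_right 0. 0 \<le> Gf (s' * a) delta1 N (omega^2)"
      using eventually_at_right_less[of 0] by eventually_elim (use GB in auto)
    show "\<forall>\<^sub>F s' in at_right 0. Gf (s' * a) delta1 N (omega^2) \<le> B s'"
      using eventually_at_right_less[of 0] by eventually_elim (use GB in auto)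
  qed
  have "((\<lambda>s'. exp (- lam1 * Gf (s' * a) delta1 N (omega^2))) \<longlongrightarrow> exp (- lam1 * 0)) (at_right 0)"
    by (intro tendsto_intros Glim)
  then have e1: "((\<lambda>s'. exp (- lam1 * Gf (s' * a) delta1 N (omega^2))) \<longlongrightarrow> 1) (at_right 0)" by simp
  have "1 \<le> prob Sm"
    by (rule tendsto_le[OF trivial_limit_at_right_real tendsto_const e1])
       (use eventually_at_right_less[of 0] Sm_ge in \<open>auto elim: eventually_mono\<close>)
  then have "prob Sm = 1" using prob_le_1[of Sm] by simp
  then have AES: "AE w in M. w \<in> Sm" by (rule AE_prob_1)
  have Im: "I \<in> borel_measurable M" unfolding I_def by measurable
  have conv: "(\<lambda>K. integral\<^sup>L M (\<lambda>w. exp (- s * (\<Sum>n<K. tm n w)))) \<longlonglongrightarrow> integral\<^sup>L M (\<lambda>w. exp (- s * I w))"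
  proof (rule integral_dominated_convergence[where w="\<lambda>_. 1"])
    show "(\<lambda>w. exp (- s * I w)) \<in> borel_measurable M" using Im by measurable
    show "(\<lambda>w. exp (- s * (\<Sum>n<K. tm n w))) \<in> borel_measurable M" for K by measurable
    show "integrable M (\<lambda>_. 1::real)" by simp
    show "AE w in M. (\<lambda>K. exp (- s * (\<Sum>n<K. tm n w))) \<longlonglongrightarrow> exp (- s * I w)"
      using AEt AES
    proof eventually_elim
      case (elim w)
      then have "(\<lambda>n. max 0 (tm n w)) = (\<lambda>n. tm n w)" by auto
      with elim have "summable (\<lambda>n. tm n w)" by (simp add: Sm_def)
      then show ?case unfolding I_def by (rule series_lim)
    qed
    show "AE w in M. norm (exp (- s * (\<Sum>n<K. tm n w))) \<le> 1" for K
      using AEt by eventually_elim (use assms(4) in \<open>auto intro!: sum_nonneg mult_nonneg_nonneg\<close>)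
  qed
  have LHS: "integral\<^sup>L M (\<lambda>w. exp (- s * I w)) = exp (- lam1 * Gf c delta1 N (omega^2))"
    using LIMSEQ_unique[OF conv lim_s[OF assms(4)]] by (simp add: ca)
  define W where "W = omega powr (- alpha1)"
  have W0: "W > 0" using om by (simp add: W_def)
  have omW: "(omega^2) powr (-1/delta1) = W"
  proof -
    have "(omega^2) powr (-1/delta1) = (omega powr 2) powr (-1/delta1)" using om by (simp add: powr_realpow)
    also have "\<dots> = omega powr (2 * (-1/delta1))" by (simp add: powr_powr)
    also have "2 * (-1/delta1) = - alpha1" using al by (simp add: field_simps)
    finally show ?thesis by (simp add: W_def)
  qed
  have term_eq: "of_nat (N choose p) * complex_of_real (c ^ p)
               * (complex_of_real (- c)) powr (complex_of_real (delta1 - real p))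
               * inc_beta (complex_of_real (- c * omega powr (- alpha1)))
                          (complex_of_real (real p - delta1)) (complex_of_real (1 - real N))
      = complex_of_real (real (N choose p) * (c powr delta1 * Bp delta1 N p (c * W)))" if p: "p \<in> {1..N}" for p
  proof -
    have eqW: "complex_of_real (- c * omega powr (- alpha1)) = complex_of_real (- (c * W))" by (simp add: W_def)
    have "of_nat (N choose p) * complex_of_real (c ^ p)
               * (complex_of_real (- c)) powr (complex_of_real (delta1 - real p))
               * inc_beta (complex_of_real (- c * omega powr (- alpha1)))
                          (complex_of_real (real p - delta1)) (complex_of_real (1 - real N))
        = of_nat (N choose p) * (complex_of_real (c ^ p)
               * (complex_of_real (- c)) powr (complex_of_real (delta1 - real p))
               * inc_beta (complex_of_real (- (c * W)))
                          (complex_of_real (real p - delta1)) (complex_of_real (1 - real N)))"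
      unfolding eqW by (simp only: mult.assoc)
    also have "\<dots> = of_nat (N choose p) * complex_of_real (c powr delta1 * Bp delta1 N p (c * W))"
      using inc_beta_link[OF c0 _ dd, of "c * W" p N] c0 W0 p by simp
    finally show ?thesis by simp
  qed
  have RHS: "exp (- complex_of_real (lam1 * pi * delta1) *
            (\<Sum>p=1..N. of_nat (N choose p) * complex_of_real (c ^ p)
               * (complex_of_real (- c)) powr (complex_of_real (delta1 - real p))
               * inc_beta (complex_of_real (- c * omega powr (- alpha1)))
                          (complex_of_real (real p - delta1)) (complex_of_real (1 - real N))))
       = complex_of_real (exp (- lam1 * Gf c delta1 N (omega^2)))"
  proof -
    define S where "S = (\<Sum>p=1..N. real (N choose p) * (c powr delta1 * Bp delta1 N p (c * W)))"
    have s1: "(\<Sum>p=1..N. of_nat (N choose p) * complex_of_real (c ^ p)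
               * (complex_of_real (- c)) powr (complex_of_real (delta1 - real p))
               * inc_beta (complex_of_real (- c * omega powr (- alpha1)))
                          (complex_of_real (real p - delta1)) (complex_of_real (1 - real N)))
        = complex_of_real S"
      unfolding S_def by (simp only: sum.cong[OF refl term_eq] of_real_sum)
    have s2: "lam1 * pi * delta1 * S = lam1 * Gf c delta1 N (omega^2)"
      unfolding Gf_def omW S_def by (simp add: sum_distrib_left mult_ac)
    have "exp (- complex_of_real (lam1 * pi * delta1) * complex_of_real S)
        = exp (complex_of_real (- (lam1 * pi * delta1 * S)))" by simp
    also have "\<dots> = exp (complex_of_real (- lam1 * Gf c delta1 N (omega^2)))" by (simp add: s2)
    also have "\<dots> = complex_of_real (exp (- lam1 * Gf c delta1 N (omega^2)))" by (rule exp_of_real)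
    finally show ?thesis unfolding s1 .
  qed
  show ?thesis
    unfolding Let_def
    unfolding delta1_def[symmetric] GM_def[symmetric] P1k_def[symmetric] omega_def[symmetric]
    unfolding tm_def[symmetric] I_def[symmetric] c_def[symmetric]
    using LHS RHS unfolding I_def by simp
qed


end
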